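(* Let $\delta=\ln\left(\frac{\beta}{1-\beta}\right)$ and $c=\frac{4M(2M+1)}{\mu(1-\beta)}\cdot\frac{\exp(\varepsilon/2)+1}{\exp(\varepsilon/2)-1}$, and let $N$ be sufficiently large such that $\sqrt{\frac{g(N)}{\ln N}}\ge c\,\frac{M^{\ln5/\delta^2}}{\delta}$. Then in any round $r$, with probability at least $1-\frac{10M+3}{N^{10}}$, $$\widehat Q_j^r\overset{1+2\delta_Q}{\sim}Q_j^{r-1}\quad\text{for every option }j,$$ where $\delta_Q=c\sqrt{\frac{\ln N}{g(N)}}$ and $\widehat Q_j^r=\frac1N\sum_{i=1}^N\widehat Q^r_{i,j}$.
   Context: Notation: for reals $a,b$ and $c\ge0$, $a\overset{c}{\sim}b$ means $\frac1c\le\frac ab\le c$. Setting. $\mathcal G=(\mathcal N,\mathcal E)$ is a connected, non-bipartite undirected graph on agents $\mathcal N=\{1,\dots,N\}$; $\mathcal N_i$ is the neighbor set of $i$, $N_i=|\mathcal N_i|$. There are $M$ options; quality signals $\Phi_j^r\in\{0,1\}$ are i.i.d. Bernoulli$(\eta_j)$ over rounds. $X^r_{i,j}\in\{0,1\}$ indicates agent $i$ adopts option $j$ in round $r$ ($\sum_jX^r_{i,j}\le1$); $D^r_j=\sum_iX^r_{i,j}$, $D^r=\sum_jD^r_j$, popularity $Q^r_j=D^r_j/D^r$, $Q^0_j=1/M$. The function $g:\mathbb N^+\to\mathbb R$ satisfies: for every $\ell>0$, $g(N)>\ell\ln N$ and $g(N)<\ell N$ for all sufficiently large $N$. Parameters: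 $\varepsilon>0$, $\mu\in(0,1)$, $\beta\in(1/2,\frac{e}{e+1})$ (so $0<\delta\le1$), $\sigma\ge11$, $h=16\sigma/(1-\beta)$. Metropolis–Hastings random walk: from $i$ move to $i'\in\mathcal N_i$ with probability $\min\{1/N_i,1/N_{i'}\}$, else stay; walk length $L=O(\log N)$ chosen so that the endpoint is at each agent with probability in $[\frac1N-\frac1{N^3},\frac1N+\frac1{N^3}]$. Round $r$: (1) an agent that adopted an option in round $r-1$ perturbs each coordinate of its adoption vector independently (keep with probability $\frac{e^{\varepsilon/2}}{e^{\varepsilon/2}+1}$, flip otherwise); (2) each such agent launches $hg(N)$ independent random-walk tokens of length $L$ carrying its perturbed vector (forwarded via per-agent FIFO queues, up to $hg(N)$ tokens per agent per slot); a token is sampled by the agent where it ends; (3) with $\Lambda^r_{i,j}$ the fraction of $i$'s sampled vectors with $j$-th coordinate $1$, $\widetilde Q^r_{i,j}=\max\{\frac{e^{\varepsilon/2}+1}{e^{\varepsilon/2}-1}\Lambda^r_{i,j}-\frac1{e^{\varepsilon/2}-1},0\}$, $\widehat Q^r_{i,j}=\widetilde Q^r_{i,j}/\sum_{j'}\widetilde Q^r_{i,j'}$, and $i$ selects option $j$ with probability $(1-\mu)\widehat Q^r_{i,j}+\mu/M$; (4) having selected $j^*$, $i$ adopts it with probability $\beta$ if $\Phi^r_{j^*}=1$, $1-\beta$ if $\Phi^r_{j^*}=0$, else adopts nothing. *)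

theory Defs
  imports "HOL-Probability.Probability"
begin

text \<open>Agents are 0..N-1, options are 0..M-1. An adoption state is a map
  agent -> adopted option (None = adopted nothing); X i = Some j encodes X_{i,j} = 1.\<close>

definition sim :: "real \<Rightarrow> real \<Rightarrow> real \<Rightarrow> bool" where
  "sim c a b \<longleftrightarrow> 1 / c \<le> a / b \<and> a / b \<le> c"

definition nbrs :: "(nat \<Rightarrow> nat \<Rightarrow> bool) \<Rightarrow> nat \<Rightarrow> nat \<Rightarrow> nat set" where
  "nbrs E N i = {k. k < N \<and> E i k}"

definition deg :: "(nat \<Rightarrow> nat \<Rightarrow> bool) \<Rightarrow> nat \<Rightarrow> nat \<Rightarrow> nat" where
  "deg E N i = card (nbrs E N i)"

definition graph_ok :: "(nat \<Rightarrow> nat \<Rightarrow> bool) \<Rightarrow> nat \<Rightarrow> bool" where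
  "graph_ok E N \<longleftrightarrow>
     (\<forall>a b. E a b \<longrightarrow> a < N \<and> b < N) \<and>
     (\<forall>a b. E a b \<longrightarrow> E b a) \<and>
     (\<forall>a. \<not> E a a) \<and>
     (\<forall>a<N. \<forall>b<N. E\<^sup>*\<^sup>* a b) \<and>
     \<not> (\<exists>col :: nat \<Rightarrow> bool. \<forall>a b. E a b \<longrightarrow> col a \<noteq> col b)"

definition mh_prob :: "(nat \<Rightarrow> nat \<Rightarrow> bool) \<Rightarrow> nat \<Rightarrow> nat \<Rightarrow> nat \<Rightarrow> real" where
  "mh_prob E N i k =
     (if k \<in> nbrs E N i then min (1 / real (deg E N i)) (1 / real (deg E N k))
      else if k = i then 1 - (\<Sum>k'\<in>nbrs E N i. min (1 / real (deg E N i)) (1 / real (deg E N k')))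
      else 0)"

definition mh_step :: "(nat \<Rightarrow> nat \<Rightarrow> bool) \<Rightarrow> nat \<Rightarrow> nat \<Rightarrow> nat pmf" where
  "mh_step E N i = embed_pmf (mh_prob E N i)"

fun walk :: "(nat \<Rightarrow> nat \<Rightarrow> bool) \<Rightarrow> nat \<Rightarrow> nat \<Rightarrow> nat \<Rightarrow> nat pmf" where
  "walk E N 0 i = return_pmf i"
| "walk E N (Suc l) i = bind_pmf (walk E N l i) (mh_step E N)"

definition mixing :: "(nat \<Rightarrow> nat \<Rightarrow> bool) \<Rightarrow> nat \<Rightarrow> nat \<Rightarrow> bool" where
  "mixing E N L \<longleftrightarrow> (\<forall>i<N. \<forall>k<N.
      1 / real N - 1 / real N ^ 3 \<le> pmf (walk E N L i) k \<and>
      pmf (walk E N L i) k \<le> 1 / real N + 1 / real N ^ 3)"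

definition adopters :: "nat \<Rightarrow> (nat \<Rightarrow> nat option) \<Rightarrow> nat set" where
  "adopters N X = {i. i < N \<and> X i \<noteq> None}"

definition tokens :: "nat \<Rightarrow> nat \<Rightarrow> (nat \<Rightarrow> nat option) \<Rightarrow> (nat \<times> nat) set" where
  "tokens N K X = adopters N X \<times> {..<K}"

definition keep_prob :: "real \<Rightarrow> real" where
  "keep_prob \<epsilon> = exp (\<epsilon> / 2) / (exp (\<epsilon> / 2) + 1)"

text \<open>Perturbed vectors v i j (only meaningful for adopters i and j < M).\<close>
definition perturb_pmf :: "nat \<Rightarrow> nat \<Rightarrow> real \<Rightarrow> (nat \<Rightarrow> nat option) \<Rightarrow> (nat \<Rightarrow> nat \<Rightarrow> bool) pmf" where
  "perturb_pmf N M \<epsilon> X =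
     map_pmf (\<lambda>keep i j. if keep i j then X i = Some j else X i \<noteq> Some j)
       (Pi_pmf (adopters N X) (\<lambda>_. False)
          (\<lambda>i. Pi_pmf {..<M} False (\<lambda>_. bernoulli_pmf (keep_prob \<epsilon>))))"

definition endpoints_pmf :: "(nat \<Rightarrow> nat \<Rightarrow> bool) \<Rightarrow> nat \<Rightarrow> nat \<Rightarrow> nat \<Rightarrow> (nat \<Rightarrow> nat option)
    \<Rightarrow> (nat \<times> nat \<Rightarrow> nat) pmf" where
  "endpoints_pmf E N L K X = Pi_pmf (tokens N K X) 0 (\<lambda>(i, t). walk E N L i)"

definition Lam :: "nat \<Rightarrow> nat \<Rightarrow> (nat \<Rightarrow> nat option) \<Rightarrow> (nat \<Rightarrow> nat \<Rightarrow> bool) \<Rightarrow> (nat \<times> nat \<Rightarrow> nat)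
    \<Rightarrow> nat \<Rightarrow> nat \<Rightarrow> real" where
  "Lam N K X v e k j =
     real (card {\<tau> \<in> tokens N K X. e \<tau> = k \<and> v (fst \<tau>) j}) /
     real (card {\<tau> \<in> tokens N K X. e \<tau> = k})"

definition Qtilde :: "real \<Rightarrow> real \<Rightarrow> real" where
  "Qtilde \<epsilon> lam = max ((exp (\<epsilon> / 2) + 1) / (exp (\<epsilon> / 2) - 1) * lam - 1 / (exp (\<epsilon> / 2) - 1)) 0"

text \<open>Convention: if all \<open>Qtilde\<close> of an agent vanish, its normalised estimate is uniform.\<close>
definition Qhat_of :: "nat \<Rightarrow> real \<Rightarrow> (nat \<Rightarrow> real) \<Rightarrow> nat \<Rightarrow> real" where
  "Qhat_of M \<epsilon> lam j =
     (let s = (\<Sum>j'<M. Qtilde \<epsilon> (lam j')) in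
      if s = 0 then 1 / real M else Qtilde \<epsilon> (lam j) / s)"

definition est_pmf :: "(nat \<Rightarrow> nat \<Rightarrow> bool) \<Rightarrow> nat \<Rightarrow> nat \<Rightarrow> nat \<Rightarrow> real \<Rightarrow> nat
    \<Rightarrow> (nat \<Rightarrow> nat option) \<Rightarrow> (nat \<Rightarrow> nat \<Rightarrow> real) pmf" where
  "est_pmf E N L M \<epsilon> K X =
     bind_pmf (perturb_pmf N M \<epsilon> X) (\<lambda>v.
       map_pmf (\<lambda>e k. Qhat_of M \<epsilon> (Lam N K X v e k)) (endpoints_pmf E N L K X))"

definition select_pmf :: "nat \<Rightarrow> real \<Rightarrow> (nat \<Rightarrow> real) \<Rightarrow> nat pmf" where
  "select_pmf M \<mu> q = embed_pmf (\<lambda>j. if j < M then (1 - \<mu>) * q j + \<mu> / real M else 0)"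

definition adopt_pmf :: "nat \<Rightarrow> nat \<Rightarrow> real \<Rightarrow> real \<Rightarrow> (nat \<Rightarrow> real) \<Rightarrow> (nat \<Rightarrow> nat \<Rightarrow> real)
    \<Rightarrow> (nat \<Rightarrow> nat option) pmf" where
  "adopt_pmf N M \<mu> \<beta> \<eta> Qh =
     bind_pmf (Pi_pmf {..<M} False (\<lambda>j. bernoulli_pmf (\<eta> j))) (\<lambda>\<Phi>.
       Pi_pmf {..<N} None (\<lambda>i.
         bind_pmf (select_pmf M \<mu> (Qh i)) (\<lambda>j.
           map_pmf (\<lambda>a. if a then Some j else None)
             (bernoulli_pmf (if \<Phi> j then \<beta> else 1 - \<beta>)))))"

text \<open>Round 1 has no previously sampled data; agents use \<open>Q^0_j = 1/M\<close>.\<close>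
definition Qhat_round :: "(nat \<Rightarrow> nat \<Rightarrow> bool) \<Rightarrow> nat \<Rightarrow> nat \<Rightarrow> nat \<Rightarrow> real \<Rightarrow> nat \<Rightarrow> nat
    \<Rightarrow> (nat \<Rightarrow> nat option) \<Rightarrow> (nat \<Rightarrow> nat \<Rightarrow> real) pmf" where
  "Qhat_round E N L M \<epsilon> K r X =
     (if r = 1 then return_pmf (\<lambda>k j. 1 / real M) else est_pmf E N L M \<epsilon> K X)"

fun Xproc :: "(nat \<Rightarrow> nat \<Rightarrow> bool) \<Rightarrow> nat \<Rightarrow> nat \<Rightarrow> nat \<Rightarrow> real \<Rightarrow> real \<Rightarrow> real \<Rightarrow> (nat \<Rightarrow> real)
    \<Rightarrow> nat \<Rightarrow> nat \<Rightarrow> (nat \<Rightarrow> nat option) pmf" where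
  "Xproc E N L M \<epsilon> \<mu> \<beta> \<eta> K 0 = return_pmf (\<lambda>_. None)"
| "Xproc E N L M \<epsilon> \<mu> \<beta> \<eta> K (Suc r) =
     bind_pmf (Xproc E N L M \<epsilon> \<mu> \<beta> \<eta> K r) (\<lambda>X.
       bind_pmf (Qhat_round E N L M \<epsilon> K (Suc r) X) (adopt_pmf N M \<mu> \<beta> \<eta>))"

text \<open>Joint law of (X^{r-1}, matrix of \<open>Qhat^r_{i,j}\<close>) for round r \<ge> 1.\<close>
definition joint_pmf :: "(nat \<Rightarrow> nat \<Rightarrow> bool) \<Rightarrow> nat \<Rightarrow> nat \<Rightarrow> nat \<Rightarrow> real \<Rightarrow> real \<Rightarrow> real \<Rightarrow> (nat \<Rightarrow> real)
    \<Rightarrow> nat \<Rightarrow> nat \<Rightarrow> ((nat \<Rightarrow> nat option) \<times> (nat \<Rightarrow> nat \<Rightarrow> real)) pmf" where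
  "joint_pmf E N L M \<epsilon> \<mu> \<beta> \<eta> K r =
     bind_pmf (Xproc E N L M \<epsilon> \<mu> \<beta> \<eta> K (r - 1)) (\<lambda>X.
       map_pmf (\<lambda>Qh. (X, Qh)) (Qhat_round E N L M \<epsilon> K r X))"

definition Qpop :: "nat \<Rightarrow> nat \<Rightarrow> nat \<Rightarrow> (nat \<Rightarrow> nat option) \<Rightarrow> nat \<Rightarrow> real" where
  "Qpop N M r X j =
     (if r = 0 then 1 / real M
      else real (card {i. i < N \<and> X i = Some j}) / real (card (adopters N X)))"

definition Qbar :: "nat \<Rightarrow> (nat \<Rightarrow> nat \<Rightarrow> real) \<Rightarrow> nat \<Rightarrow> real" where
  "Qbar N Qh j = (1 / real N) * (\<Sum>i<N. Qh i j)"

end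

theory Submission
  imports Defs "HOL-Real_Asymp.Real_Asymp"
begin

lemma measure_bind_pmf_eq:
  "measure_pmf.prob (bind_pmf p f) A = measure_pmf.expectation p (\<lambda>x. measure_pmf.prob (f x) A)"
proof -
  have "ennreal (measure_pmf.prob (bind_pmf p f) A) = emeasure (bind_pmf p f) A"
    by (simp add: measure_pmf.emeasure_eq_measure)
  also have "\<dots> = (\<integral>\<^sup>+x. emeasure (f x) A \<partial>p)" by simp
  also have "\<dots> = (\<integral>\<^sup>+x. ennreal (measure_pmf.prob (f x) A) \<partial>p)"
    by (simp add: measure_pmf.emeasure_eq_measure)
  also have "\<dots> = ennreal (measure_pmf.expectation p (\<lambda>x. measure_pmf.prob (f x) A))"
    by (intro nn_integral_eq_integral measure_pmf.integrable_const_bound[where B=1]) auto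
  finally show ?thesis by (simp add: integral_nonneg_AE)
qed

lemma bind_pmf_lower:
  assumes G: "measure_pmf.prob p {x. G x} \<ge> 1 - e1"
    and F: "\<And>x. x \<in> set_pmf p \<Longrightarrow> G x \<Longrightarrow> measure_pmf.prob (f x) A \<ge> 1 - e2"
    and e1: "e1 \<ge> 0" and e2: "e2 \<ge> 0"
  shows "measure_pmf.prob (bind_pmf p f) A \<ge> 1 - e1 - e2"
proof (cases "e2 \<le> 1")
  case False
  have "0 \<le> measure_pmf.prob (bind_pmf p f) A" by simp
  then show ?thesis using False e1 by linarith
next
  case True
  have "measure_pmf.expectation p (\<lambda>x. (1 - e2) * indicator {x. G x} x)
        \<le> measure_pmf.expectation p (\<lambda>x. measure_pmf.prob (f x) A)"
  proof (rule integral_mono_AE)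
    show "integrable (measure_pmf p) (\<lambda>x. (1 - e2) * indicator {x. G x} x)"
      by (intro measure_pmf.integrable_const_bound[where B="\<bar>1-e2\<bar>"]) (auto simp: indicator_def)
    show "integrable (measure_pmf p) (\<lambda>x. measure_pmf.prob (f x) A)"
      by (intro measure_pmf.integrable_const_bound[where B=1]) auto
    show "AE x in measure_pmf p. (1 - e2) * indicator {x. G x} x \<le> measure_pmf.prob (f x) A"
      using F by (intro AE_pmfI) (auto simp: indicator_def)
  qed
  moreover have "measure_pmf.expectation p (\<lambda>x. (1 - e2) * indicator {x. G x} x)
     = (1 - e2) * measure_pmf.prob p {x. G x}"
    by simp
  moreover have "(1 - e2) * measure_pmf.prob p {x. G x} \<ge> (1 - e2) * (1 - e1)"
    using G True by (intro mult_left_mono) auto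
  moreover have "(1 - e2) * (1 - e1) \<ge> 1 - e1 - e2" using e1 e2 by (simp add: algebra_simps)
  ultimately show ?thesis by (simp add: measure_bind_pmf_eq)
qed

lemma exp_neg_bound:
  fixes x :: real assumes "0 \<le> x" "x \<le> 1"
  shows "exp (-x) \<le> 1 - x + x\<^sup>2"
proof -
  have "1 + x \<le> exp x" by (rule exp_ge_add_one_self_aux) (use assms in auto)
  hence "exp (-x) \<le> 1 / (1 + x)" using assms by (simp add: exp_minus field_simps)
  also have "\<dots> \<le> 1 - x + x\<^sup>2"
  proof -
    have "1 \<le> (1 + x) * (1 - x + x\<^sup>2)" using assms by (simp add: algebra_simps power2_eq_square power3_eq_cube)
    thus ?thesis using assms by (simp add: field_simps)
  qed
  finally show ?thesis .
qed

lemma mgf_Pi_pmf: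
  fixes I :: "'i set" and P :: "'i \<Rightarrow> 'a pmf" and F :: "'i \<Rightarrow> 'a \<Rightarrow> bool" and a :: real
  assumes fin: "finite I" and a: "a > 0"
  shows "measure_pmf.expectation (Pi_pmf I d P) (\<lambda>\<omega>. a ^ card {x\<in>I. F x (\<omega> x)})
       \<le> exp ((a - 1) * (\<Sum>x\<in>I. measure_pmf.prob (P x) {y. F x y}))"
proof -
  define h where "h x y = (if F x y then a else 1)" for x y
  have eq: "a ^ card {x\<in>I. F x (\<omega> x)} = (\<Prod>x\<in>I. h x (\<omega> x))" for \<omega>
  proof -
    have "(\<Prod>x\<in>I. h x (\<omega> x)) = (\<Prod>x\<in>I. if F x (\<omega> x) then a else 1)" by (simp add: h_def)
    also have "\<dots> = (\<Prod>x\<in>{x\<in>I. F x (\<omega> x)}. a)"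
      using fin by (simp add: prod.If_cases Int_def)
    finally show ?thesis by simp
  qed
  have ex: "measure_pmf.expectation (P x) (h x) = 1 + (a - 1) * measure_pmf.prob (P x) {y. F x y}" for x
  proof -
    have "h x = (\<lambda>y. 1 + (a - 1) * indicator {y. F x y} y)" by (auto simp: h_def indicator_def)
    moreover have "measure_pmf.expectation (P x) (\<lambda>y. 1 + (a - 1) * indicator {y. F x y} y)
       = measure_pmf.expectation (P x) (\<lambda>y. 1) + measure_pmf.expectation (P x) (\<lambda>y. (a - 1) * indicator {y. F x y} y)"
      by (rule Bochner_Integration.integral_add)
         (auto intro!: measure_pmf.integrable_const_bound[where B="1 + \<bar>a - 1\<bar>"] simp: indicator_def)
    ultimately show ?thesis by (simp add: measure_pmf.prob_space)
  qed
  have "measure_pmf.expectation (Pi_pmf I d P) (\<lambda>\<omega>. a ^ card {x\<in>I. F x (\<omega> x)})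
      = measure_pmf.expectation (Pi_pmf I d P) (\<lambda>\<omega>. \<Prod>x\<in>I. h x (\<omega> x))" by (simp add: eq)
  also have "\<dots> = (\<Prod>x\<in>I. measure_pmf.expectation (P x) (h x))"
    by (rule expectation_prod_Pi_pmf[OF fin])
       (use a in \<open>auto simp: h_def intro!: measure_pmf.integrable_const_bound[where B="a + 1"]\<close>)
  also have "\<dots> \<le> (\<Prod>x\<in>I. exp ((a - 1) * measure_pmf.prob (P x) {y. F x y}))"
  proof (rule prod_mono)
    fix x assume "x \<in> I"
    have "0 \<le> 1 + (a - 1) * measure_pmf.prob (P x) {y. F x y}"
    proof -
      have "(a - 1) * measure_pmf.prob (P x) {y. F x y} \<ge> -1 * 1"
      proof (cases "a \<ge> 1")
        case True
        have "0 \<le> (a - 1) * measure_pmf.prob (P x) {y. F x y}" using True by simp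
        thus ?thesis by linarith
      next
        case False
        have "(1 - a) * measure_pmf.prob (P x) {y. F x y} \<le> 1 * 1"
          using False a by (intro mult_mono) auto
        thus ?thesis by (simp add: algebra_simps)
      qed
      thus ?thesis by simp
    qed
    moreover have "1 + (a - 1) * measure_pmf.prob (P x) {y. F x y} \<le> exp ((a - 1) * measure_pmf.prob (P x) {y. F x y})"
      by (metis add.commute exp_ge_add_one_self)
    ultimately show "0 \<le> measure_pmf.expectation (P x) (h x) \<and>
         measure_pmf.expectation (P x) (h x) \<le> exp ((a - 1) * measure_pmf.prob (P x) {y. F x y})"
      by (simp add: ex)
  qed
  also have "\<dots> = exp ((a - 1) * (\<Sum>x\<in>I. measure_pmf.prob (P x) {y. F x y}))"
    using fin by (simp add: exp_sum sum_distrib_left)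
  finally show ?thesis .
qed

lemma pmf_markov_exp:
  fixes u :: "'a \<Rightarrow> real"
  assumes "\<And>x. u x \<ge> 0" "c > 0" "\<And>x. u x \<le> B"
  shows "measure_pmf.prob p {x. u x \<ge> c} \<le> measure_pmf.expectation p u / c"
proof -
  have "integrable (measure_pmf p) u"
    using assms by (intro measure_pmf.integrable_const_bound[where B=B]) auto
  thus ?thesis using integral_Markov_inequality_measure[of "measure_pmf p" u UNIV c] assms by auto
qed

lemma chernoff_Pi_pmf:
  fixes I :: "'i set" and P :: "'i \<Rightarrow> 'a pmf" and F :: "'i \<Rightarrow> 'a \<Rightarrow> bool"
  defines "m \<equiv> (\<Sum>x\<in>I. measure_pmf.prob (P x) {y. F x y})"
  assumes fin: "finite I" and m': "m \<le> m'" and t: "0 < t" "t \<le> 2 * m'"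
  shows "measure_pmf.prob (Pi_pmf I d P) {\<omega>. real (card {x\<in>I. F x (\<omega> x)}) \<ge> m + t} \<le> exp (- t\<^sup>2 / (4 * m'))"
    and "measure_pmf.prob (Pi_pmf I d P) {\<omega>. real (card {x\<in>I. F x (\<omega> x)}) \<le> m - t} \<le> exp (- t\<^sup>2 / (4 * m'))"
proof -
  define l where "l = t / (2 * m')"
  have m'pos: "m' > 0" using t by linarith
  have l: "0 < l" "l \<le> 1" using t m'pos by (auto simp: l_def field_simps)
  have m0: "m \<ge> 0" unfolding m_def by (intro sum_nonneg) auto
  have key: "l\<^sup>2 * m' - l * t = - t\<^sup>2 / (4 * m')"
    using m'pos by (simp add: l_def field_simps power2_eq_square)
  have cardle: "card {x\<in>I. F x (\<omega> x)} \<le> card I" for \<omega> using fin by (intro card_mono) auto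
  let ?S = "\<lambda>\<omega>. card {x\<in>I. F x (\<omega> x)}"
  have "measure_pmf.prob (Pi_pmf I d P) {\<omega>. real (?S \<omega>) \<ge> m + t}
      \<le> measure_pmf.prob (Pi_pmf I d P) {\<omega>. exp l ^ ?S \<omega> \<ge> exp (l * (m + t))}"
  proof (rule measure_pmf.finite_measure_mono)
    show "{\<omega>. real (?S \<omega>) \<ge> m + t} \<subseteq> {\<omega>. exp l ^ ?S \<omega> \<ge> exp (l * (m + t))}"
      using l by (auto simp: exp_of_nat_mult[symmetric] mult.commute)
  qed auto
  also have "\<dots> \<le> measure_pmf.expectation (Pi_pmf I d P) (\<lambda>\<omega>. exp l ^ ?S \<omega>) / exp (l * (m + t))"
    by (rule pmf_markov_exp[where B="exp l ^ card I"]) (auto intro!: power_increasing cardle simp: l less_imp_le)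
  also have "\<dots> \<le> exp ((exp l - 1) * m) / exp (l * (m + t))"
    by (intro divide_right_mono) (use mgf_Pi_pmf[OF fin, of "exp l" d P F] in \<open>auto simp: m_def\<close>)
  also have "\<dots> = exp ((exp l - 1) * m - l * (m + t))" by (simp add: exp_diff)
  also have "\<dots> \<le> exp (l\<^sup>2 * m' - l * t)"
  proof -
    have "exp l - 1 \<le> l + l\<^sup>2" using exp_bound[of l] l by simp
    hence "(exp l - 1) * m \<le> (l + l\<^sup>2) * m" using m0 by (intro mult_right_mono) auto
    moreover have "l\<^sup>2 * m \<le> l\<^sup>2 * m'" using m' by (intro mult_left_mono) auto
    ultimately show ?thesis by (simp add: algebra_simps)
  qed
  finally show "measure_pmf.prob (Pi_pmf I d P) {\<omega>. real (?S \<omega>) \<ge> m + t} \<le> exp (- t\<^sup>2 / (4 * m'))"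
    by (simp add: key)
  have "measure_pmf.prob (Pi_pmf I d P) {\<omega>. real (?S \<omega>) \<le> m - t}
      \<le> measure_pmf.prob (Pi_pmf I d P) {\<omega>. exp (-l) ^ ?S \<omega> \<ge> exp (- l * (m - t))}"
  proof (rule measure_pmf.finite_measure_mono)
    show "{\<omega>. real (?S \<omega>) \<le> m - t} \<subseteq> {\<omega>. exp (-l) ^ ?S \<omega> \<ge> exp (- l * (m - t))}"
      using l by (auto simp: exp_of_nat_mult[symmetric] mult.commute)
  qed auto
  also have "\<dots> \<le> measure_pmf.expectation (Pi_pmf I d P) (\<lambda>\<omega>. exp (-l) ^ ?S \<omega>) / exp (- l * (m - t))"
  proof (rule pmf_markov_exp[where B=1])
    fix \<omega> have "exp (-l) \<le> 1" using l by simp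
    thus "exp (-l) ^ ?S \<omega> \<le> 1" by (intro power_le_one) auto
  qed auto
  also have "\<dots> \<le> exp ((exp (-l) - 1) * m) / exp (- l * (m - t))"
    by (intro divide_right_mono) (use mgf_Pi_pmf[OF fin, of "exp (-l)" d P F] in \<open>auto simp: m_def\<close>)
  also have "\<dots> = exp ((exp (-l) - 1) * m + l * (m - t))" by (simp add: exp_diff[symmetric])
  also have "\<dots> \<le> exp (l\<^sup>2 * m' - l * t)"
  proof -
    have "exp (-l) - 1 \<le> - l + l\<^sup>2" using exp_neg_bound[of l] l by simp
    hence "(exp (-l) - 1) * m \<le> (- l + l\<^sup>2) * m" using m0 by (intro mult_right_mono) auto
    moreover have "l\<^sup>2 * m \<le> l\<^sup>2 * m'" using m' by (intro mult_left_mono) auto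
    ultimately show ?thesis by (simp add: algebra_simps)
  qed
  finally show "measure_pmf.prob (Pi_pmf I d P) {\<omega>. real (?S \<omega>) \<le> m - t} \<le> exp (- t\<^sup>2 / (4 * m'))"
    by (simp add: key)
qed

lemma finite_adopters[simp]: "finite (adopters N X)"
  by (rule finite_subset[of _ "{..<N}"]) (auto simp: adopters_def)

lemma adopters_lt: "i \<in> adopters N X \<Longrightarrow> i < N"
  by (auto simp: adopters_def)

lemma finite_tokens[simp]: "finite (tokens N K X)"
  by (simp add: tokens_def)

lemma sum_tokens:
  "(\<Sum>\<tau>\<in>tokens N K X. f (fst \<tau>)) = real K * (\<Sum>i\<in>adopters N X. f i)"
proof -
  have "(\<Sum>\<tau>\<in>tokens N K X. f (fst \<tau>)) = (\<Sum>i\<in>adopters N X. \<Sum>t\<in>{..<K}. f i)"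
    unfolding tokens_def by (subst sum.cartesian_product) (simp add: case_prod_unfold)
  thus ?thesis by (simp add: sum_distrib_left)
qed

lemma chernoff_tokens:
  fixes S :: "nat set"
  assumes S: "S \<subseteq> adopters N X"
    and mS: "real K * (\<Sum>i\<in>S. pmf (walk E N L i) k) \<le> m'"
    and t: "0 < t" "t \<le> 2 * m'"
  shows "measure_pmf.prob (endpoints_pmf E N L K X)
           {e. \<bar>real (card {\<tau>\<in>tokens N K X. e \<tau> = k \<and> fst \<tau> \<in> S}) - real K * (\<Sum>i\<in>S. pmf (walk E N L i) k)\<bar> \<ge> t}
         \<le> 2 * exp (- t\<^sup>2 / (4 * m'))"
proof -
  define P where "P = (\<lambda>(i::nat, t::nat). walk E N L i)"
  define F where "F = (\<lambda>\<tau>::nat\<times>nat. \<lambda>y. y = k \<and> fst \<tau> \<in> S)"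
  have msum: "(\<Sum>\<tau>\<in>tokens N K X. measure_pmf.prob (P \<tau>) {y. F \<tau> y}) = real K * (\<Sum>i\<in>S. pmf (walk E N L i) k)"
  proof -
    have "(\<Sum>\<tau>\<in>tokens N K X. measure_pmf.prob (P \<tau>) {y. F \<tau> y})
        = (\<Sum>\<tau>\<in>tokens N K X. (\<lambda>i. if i \<in> S then pmf (walk E N L i) k else 0) (fst \<tau>))"
      by (intro sum.cong refl) (auto simp: P_def F_def case_prod_unfold measure_pmf_single)
    also have "\<dots> = real K * (\<Sum>i\<in>adopters N X. if i \<in> S then pmf (walk E N L i) k else 0)"
      by (rule sum_tokens)
    also have "(\<Sum>i\<in>adopters N X. if i \<in> S then pmf (walk E N L i) k else 0) = (\<Sum>i\<in>S. pmf (walk E N L i) k)"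
      using S by (simp add: sum.If_cases Int_absorb1)
    finally show ?thesis .
  qed
  have ep: "endpoints_pmf E N L K X = Pi_pmf (tokens N K X) 0 P"
    by (simp add: endpoints_pmf_def P_def)
  let ?m = "real K * (\<Sum>i\<in>S. pmf (walk E N L i) k)"
  have "{e. \<bar>real (card {\<tau>\<in>tokens N K X. e \<tau> = k \<and> fst \<tau> \<in> S}) - ?m\<bar> \<ge> t}
      \<subseteq> {e. real (card {\<tau>\<in>tokens N K X. F \<tau> (e \<tau>)}) \<ge> ?m + t} \<union> {e. real (card {\<tau>\<in>tokens N K X. F \<tau> (e \<tau>)}) \<le> ?m - t}"
    by (auto simp: F_def abs_if split: if_splits)
  hence "measure_pmf.prob (endpoints_pmf E N L K X) {e. \<bar>real (card {\<tau>\<in>tokens N K X. e \<tau> = k \<and> fst \<tau> \<in> S}) - ?m\<bar> \<ge> t}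
     \<le> measure_pmf.prob (Pi_pmf (tokens N K X) 0 P) ({e. real (card {\<tau>\<in>tokens N K X. F \<tau> (e \<tau>)}) \<ge> ?m + t} \<union> {e. real (card {\<tau>\<in>tokens N K X. F \<tau> (e \<tau>)}) \<le> ?m - t})"
    unfolding ep by (intro measure_pmf.finite_measure_mono) auto
  also have "\<dots> \<le> measure_pmf.prob (Pi_pmf (tokens N K X) 0 P) {e. real (card {\<tau>\<in>tokens N K X. F \<tau> (e \<tau>)}) \<ge> ?m + t}
      + measure_pmf.prob (Pi_pmf (tokens N K X) 0 P) {e. real (card {\<tau>\<in>tokens N K X. F \<tau> (e \<tau>)}) \<le> ?m - t}"
    by (rule measure_Un_le) auto
  also have "\<dots> \<le> exp (- t\<^sup>2 / (4 * m')) + exp (- t\<^sup>2 / (4 * m'))"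
    using chernoff_Pi_pmf[of "tokens N K X" P F m' t 0] msum mS t by (intro add_mono) auto
  finally show ?thesis by simp
qed

lemma ratio_close:
  fixes A n B \<rho> \<eta> :: real
  assumes B: "B > 0" and \<rho>: "0 \<le> \<rho>" "\<rho> \<le> 1" and \<eta>: "0 \<le> \<eta>" "\<eta> \<le> 1/3"
    and n: "\<bar>n - B\<bar> \<le> \<eta> * B" and A: "\<bar>A - \<rho> * B\<bar> \<le> \<eta> * B"
  shows "\<bar>A / n - \<rho>\<bar> \<le> 3 * \<eta>"
proof -
  have npos: "n \<ge> (1 - \<eta>) * B" using n by (simp add: algebra_simps abs_le_iff)
  have "(1 - \<eta>) * B > 0" using B \<eta> by simp
  hence np: "n > 0" using npos by linarith
  have "\<bar>A - \<rho> * n\<bar> \<le> \<bar>A - \<rho> * B\<bar> + \<rho> * \<bar>B - n\<bar>"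
  proof -
    have "A - \<rho> * n = (A - \<rho> * B) + \<rho> * (B - n)" by (simp add: algebra_simps)
    hence "\<bar>A - \<rho> * n\<bar> \<le> \<bar>A - \<rho> * B\<bar> + \<bar>\<rho> * (B - n)\<bar>" by (metis abs_triangle_ineq)
    thus ?thesis using \<rho> by (simp add: abs_mult)
  qed
  also have "\<dots> \<le> \<eta> * B + 1 * (\<eta> * B)"
    using A n \<rho> by (intro add_mono mult_mono) (auto simp: abs_minus_commute)
  finally have num: "\<bar>A - \<rho> * n\<bar> \<le> 2 * \<eta> * B" by (simp add: algebra_simps)
  have "\<bar>A / n - \<rho>\<bar> = \<bar>A - \<rho> * n\<bar> / n" using np by (simp add: field_simps)
  also have "\<dots> \<le> 2 * \<eta> * B / ((1 - \<eta>) * B)"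
    using num npos np \<eta> B by (intro frac_le) auto
  also have "\<dots> = 2 * \<eta> / (1 - \<eta>)" using B by simp
  also have "\<dots> \<le> 3 * \<eta>"
  proof -
    have "\<eta> * (\<eta> * 3) \<le> \<eta> * 1" using \<eta> by (intro mult_left_mono) auto
    thus ?thesis using \<eta> by (simp add: field_simps)
  qed
  finally show ?thesis .
qed

lemma stageE:
  fixes E :: "nat \<Rightarrow> nat \<Rightarrow> bool" and N L K M :: nat and X :: "nat \<Rightarrow> nat option" and v :: "nat \<Rightarrow> nat \<Rightarrow> bool"
  assumes mix: "mixing E N L" and N: "N \<ge> 2" and K: "K \<ge> 1"
    and D: "card (adopters N X) > 0" and \<theta>: "\<theta> > 0" "\<theta> + 1 / real N ^ 2 \<le> 1/3"
  defines "B \<equiv> real K * real (card (adopters N X)) / real N"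
  defines "m' \<equiv> real K * real (card (adopters N X)) * (1 / real N + 1 / real N ^ 3)"
  shows "measure_pmf.prob (endpoints_pmf E N L K X)
    {e. \<forall>k<N. \<forall>j<M. \<bar>Lam N K X v e k j - real (card {i\<in>adopters N X. v i j}) / real (card (adopters N X))\<bar>
          \<le> 3 * (\<theta> + 1 / real N ^ 2)}
    \<ge> 1 - 2 * real N * (real M + 1) * exp (- (\<theta> * B)\<^sup>2 / (4 * m'))"
proof -
  define Adp where "Adp = adopters N X"
  define D where "D = real (card Adp)"
  define T where "T = tokens N K X"
  define \<pi> where "\<pi> i k = pmf (walk E N L i) k" for i k
  define t where "t = \<theta> * B"
  define mS where "mS S k = real K * (\<Sum>i\<in>S. \<pi> i k)" for S k
  define cnt where "cnt S k e = real (card {\<tau>\<in>T. e \<tau> = k \<and> fst \<tau> \<in> S})" for S k and e :: "nat \<times> nat \<Rightarrow> nat"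
  define Sj where "Sj j = {i\<in>Adp. v i j}" for j
  define bad where "bad S k = {e. \<bar>cnt S k e - mS S k\<bar> \<ge> t}" for S k
  have Npos: "real N > 0" using N by simp
  have Dpos: "D > 0" using D by (simp add: D_def Adp_def)
  have Bpos: "B > 0" using Dpos K Npos by (simp add: B_def D_def Adp_def)
  have B_eq: "B = real K * D / real N" by (simp add: B_def D_def Adp_def)
  have m'_eq: "m' = B * (1 + 1 / real N ^ 2)" using Npos
    by (simp add: m'_def B_def field_simps power2_eq_square power3_eq_cube)
  have tpos: "t > 0" using \<theta> Bpos by (simp add: t_def)
  have \<theta>1: "\<theta> \<le> 1"
  proof -
    have "0 \<le> 1 / real N ^ 2" by simp
    thus ?thesis using \<theta> by linarith
  qed
  have t2: "t \<le> 2 * m'"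
  proof -
    have "t \<le> B" using \<theta>1 Bpos by (simp add: t_def)
    also have "B \<le> 2 * m'" using Bpos by (simp add: m'_eq field_simps)
    finally show ?thesis .
  qed
  have pi_bounds: "\<bar>\<pi> i k - 1 / real N\<bar> \<le> 1 / real N ^ 3" if "i \<in> Adp" "k < N" for i k
  proof -
    have h: "1 / real N - 1 / real N ^ 3 \<le> \<pi> i k \<and> \<pi> i k \<le> 1 / real N + 1 / real N ^ 3"
      using mix that adopters_lt[of i N X] unfolding mixing_def \<pi>_def Adp_def by auto
    thus ?thesis unfolding abs_le_iff by linarith
  qed
  have mS_close: "\<bar>mS S k - real K * real (card S) / real N\<bar> \<le> real K * real (card S) / real N ^ 3"
    if "S \<subseteq> Adp" "k < N" for S k
  proof -
    have fin: "finite S" using that finite_subset[of S Adp] by (auto simp: Adp_def)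
    have "\<bar>(\<Sum>i\<in>S. \<pi> i k) - real (card S) / real N\<bar> = \<bar>\<Sum>i\<in>S. (\<pi> i k - 1 / real N)\<bar>"
      by (simp add: sum_subtractf)
    also have "\<dots> \<le> (\<Sum>i\<in>S. \<bar>\<pi> i k - 1 / real N\<bar>)" by (rule sum_abs)
    also have "\<dots> \<le> (\<Sum>i\<in>S. 1 / real N ^ 3)" using that pi_bounds by (intro sum_mono) auto
    also have "\<dots> = real (card S) / real N ^ 3" by simp
    finally have "\<bar>(\<Sum>i\<in>S. \<pi> i k) - real (card S) / real N\<bar> \<le> real (card S) / real N ^ 3" .
    hence "real K * \<bar>(\<Sum>i\<in>S. \<pi> i k) - real (card S) / real N\<bar> \<le> real K * (real (card S) / real N ^ 3)"
      by (intro mult_left_mono) auto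
    moreover have "mS S k - real K * real (card S) / real N = real K * ((\<Sum>i\<in>S. \<pi> i k) - real (card S) / real N)"
      by (simp add: mS_def algebra_simps)
    ultimately show ?thesis by (simp add: abs_mult)
  qed
  have cardS: "real (card S) \<le> D" if "S \<subseteq> Adp" for S
    using that by (simp add: D_def Adp_def card_mono)
  have mS_le: "mS S k \<le> m'" if "S \<subseteq> Adp" "k < N" for S k
  proof -
    have "mS S k \<le> real K * real (card S) / real N + real K * real (card S) / real N ^ 3"
      using mS_close[OF that] by (simp add: abs_le_iff)
    also have "\<dots> \<le> real K * D / real N + real K * D / real N ^ 3"
      using cardS[OF that(1)] Npos by (intro add_mono divide_right_mono mult_left_mono) auto
    also have "\<dots> = m'" by (simp add: m'_def D_def Adp_def field_simps)
    finally show ?thesis .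
  qed
  have bad_prob: "measure_pmf.prob (endpoints_pmf E N L K X) (bad S k) \<le> 2 * exp (- t\<^sup>2 / (4 * m'))"
    if "S \<subseteq> Adp" "k < N" for S k
    unfolding bad_def cnt_def mS_def \<pi>_def T_def
    by (rule chernoff_tokens) (use that mS_le[OF that] tpos t2 in \<open>auto simp: Adp_def mS_def \<pi>_def\<close>)
  have good: "\<bar>Lam N K X v e k j - real (card (Sj j)) / D\<bar> \<le> 3 * (\<theta> + 1 / real N ^ 2)"
    if k: "k < N" and e1: "e \<notin> bad Adp k" and e2: "e \<notin> bad (Sj j) k" for e k j
  proof -
    let ?\<eta> = "\<theta> + 1 / real N ^ 2"
    have SA: "Sj j \<subseteq> Adp" by (auto simp: Sj_def)
    have c1: "cnt Adp k e = real (card {\<tau>\<in>tokens N K X. e \<tau> = k})"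
      unfolding cnt_def T_def by (rule arg_cong[where f="\<lambda>x. real (card x)"]) (auto simp: tokens_def Adp_def)
    have c2: "cnt (Sj j) k e = real (card {\<tau>\<in>tokens N K X. e \<tau> = k \<and> v (fst \<tau>) j})"
      unfolding cnt_def T_def by (rule arg_cong[where f="\<lambda>x. real (card x)"]) (auto simp: tokens_def Adp_def Sj_def)
    have Lam_eq: "Lam N K X v e k j = cnt (Sj j) k e / cnt Adp k e" by (simp add: Lam_def c1 c2)
    have eB: "real K * D / real N ^ 3 = B * (1 / real N ^ 2)" using Npos
      by (simp add: B_eq field_simps power2_eq_square power3_eq_cube)
    have "\<bar>cnt Adp k e - B\<bar> \<le> \<bar>cnt Adp k e - mS Adp k\<bar> + \<bar>mS Adp k - B\<bar>" by linarith
    also have "\<dots> \<le> t + B * (1 / real N ^ 2)"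
      using e1 mS_close[of Adp k] k eB by (intro add_mono) (auto simp: bad_def B_eq D_def)
    also have "\<dots> = ?\<eta> * B" by (simp add: t_def algebra_simps)
    finally have n: "\<bar>cnt Adp k e - B\<bar> \<le> ?\<eta> * B" .
    let ?\<rho> = "real (card (Sj j)) / D"
    have \<rho>B: "?\<rho> * B = real K * real (card (Sj j)) / real N" using Dpos by (simp add: B_eq)
    have "\<bar>cnt (Sj j) k e - ?\<rho> * B\<bar> \<le> \<bar>cnt (Sj j) k e - mS (Sj j) k\<bar> + \<bar>mS (Sj j) k - ?\<rho> * B\<bar>"
      using abs_triangle_ineq[of "cnt (Sj j) k e - mS (Sj j) k" "mS (Sj j) k - ?\<rho> * B"] by simp
    also have "\<dots> \<le> t + B * (1 / real N ^ 2)"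
    proof (intro add_mono)
      show "\<bar>cnt (Sj j) k e - mS (Sj j) k\<bar> \<le> t" using e2 by (auto simp: bad_def)
      have "\<bar>mS (Sj j) k - ?\<rho> * B\<bar> \<le> real K * real (card (Sj j)) / real N ^ 3"
        using mS_close[OF SA k] unfolding \<rho>B .
      also have "\<dots> \<le> real K * D / real N ^ 3"
        using cardS[OF SA] Npos by (intro divide_right_mono mult_left_mono) auto
      finally show "\<bar>mS (Sj j) k - ?\<rho> * B\<bar> \<le> B * (1 / real N ^ 2)" using eB by simp
    qed
    also have "\<dots> = ?\<eta> * B" by (simp add: t_def algebra_simps)
    finally have A: "\<bar>cnt (Sj j) k e - ?\<rho> * B\<bar> \<le> ?\<eta> * B" .
    have \<rho>: "0 \<le> ?\<rho>" "?\<rho> \<le> 1" using cardS[OF SA] Dpos by auto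
    show ?thesis unfolding Lam_eq
      by (rule ratio_close[OF Bpos \<rho> _ _ n A]) (use \<theta> in auto)
  qed
  let ?Bad = "\<Union>k\<in>{..<N}. (bad Adp k \<union> (\<Union>j\<in>{..<M}. bad (Sj j) k))"
  have sub: "- ?Bad \<subseteq> {e. \<forall>k<N. \<forall>j<M. \<bar>Lam N K X v e k j - real (card {i\<in>adopters N X. v i j}) / real (card (adopters N X))\<bar>
          \<le> 3 * (\<theta> + 1 / real N ^ 2)}"
    using good by (auto simp: Sj_def Adp_def D_def)
  have "measure_pmf.prob (endpoints_pmf E N L K X) ?Bad
      \<le> (\<Sum>k\<in>{..<N}. measure_pmf.prob (endpoints_pmf E N L K X) (bad Adp k \<union> (\<Union>j\<in>{..<M}. bad (Sj j) k)))"
    by (rule measure_UNION_le) auto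
  also have "\<dots> \<le> (\<Sum>k\<in>{..<N}. (real M + 1) * (2 * exp (- t\<^sup>2 / (4 * m'))))"
  proof (rule sum_mono)
    fix k assume k: "k \<in> {..<N}"
    have "measure_pmf.prob (endpoints_pmf E N L K X) (bad Adp k \<union> (\<Union>j\<in>{..<M}. bad (Sj j) k))
       \<le> measure_pmf.prob (endpoints_pmf E N L K X) (bad Adp k) + measure_pmf.prob (endpoints_pmf E N L K X) (\<Union>j\<in>{..<M}. bad (Sj j) k)"
      by (rule measure_Un_le) auto
    also have "\<dots> \<le> 2 * exp (- t\<^sup>2 / (4 * m')) + (\<Sum>j\<in>{..<M}. measure_pmf.prob (endpoints_pmf E N L K X) (bad (Sj j) k))"
      using bad_prob[of Adp k] k by (intro add_mono measure_UNION_le) auto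
    also have "\<dots> \<le> 2 * exp (- t\<^sup>2 / (4 * m')) + (\<Sum>j\<in>{..<M}. 2 * exp (- t\<^sup>2 / (4 * m')))"
      using bad_prob k by (intro add_mono sum_mono) (auto simp: Sj_def)
    finally show "measure_pmf.prob (endpoints_pmf E N L K X) (bad Adp k \<union> (\<Union>j\<in>{..<M}. bad (Sj j) k))
       \<le> (real M + 1) * (2 * exp (- t\<^sup>2 / (4 * m')))" by (simp add: algebra_simps)
  qed
  also have "\<dots> = 2 * real N * (real M + 1) * exp (- (\<theta> * B)\<^sup>2 / (4 * m'))" by (simp add: t_def)
  finally have badp: "measure_pmf.prob (endpoints_pmf E N L K X) ?Bad \<le> 2 * real N * (real M + 1) * exp (- (\<theta> * B)\<^sup>2 / (4 * m'))" .
  have "1 - measure_pmf.prob (endpoints_pmf E N L K X) ?Bad = measure_pmf.prob (endpoints_pmf E N L K X) (- ?Bad)"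
    by (simp add: measure_pmf.prob_compl[symmetric] Compl_eq_Diff_UNIV)
  also have "\<dots> \<le> measure_pmf.prob (endpoints_pmf E N L K X) {e. \<forall>k<N. \<forall>j<M. \<bar>Lam N K X v e k j - real (card {i\<in>adopters N X. v i j}) / real (card (adopters N X))\<bar>
          \<le> 3 * (\<theta> + 1 / real N ^ 2)}"
    by (rule measure_pmf.finite_measure_mono[OF sub]) auto
  finally show ?thesis using badp by linarith
qed

lemma prob_compl_pmf: "measure_pmf.prob p (- A) = 1 - measure_pmf.prob p A"
proof -
  have "- A = space (measure_pmf p) - A" by auto
  thus ?thesis using measure_pmf.prob_compl[of A p] by simp
qed

lemma keep_prob_bounds: "0 \<le> keep_prob \<epsilon>" "keep_prob \<epsilon> \<le> 1"
  unfolding keep_prob_def by (auto simp: field_simps add_pos_pos)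

lemma prob_component_true:
  fixes j M :: nat
  assumes "j < M" "0 \<le> q" "q \<le> 1"
  shows "measure_pmf.prob (Pi_pmf {..<M} False (\<lambda>_. bernoulli_pmf q)) {row. row j} = q"
proof -
  have "measure_pmf.prob (Pi_pmf {..<M} False (\<lambda>_. bernoulli_pmf q)) {row. row j}
     = measure_pmf.prob (map_pmf (\<lambda>row. row j) (Pi_pmf {..<M} False (\<lambda>_. bernoulli_pmf q))) {True}"
    by (simp add: vimage_def)
  also have "map_pmf (\<lambda>row. row j) (Pi_pmf {..<M} False (\<lambda>_. bernoulli_pmf q)) = bernoulli_pmf q"
    using assms by (subst Pi_pmf_component) auto
  finally show ?thesis using assms by (simp add: measure_pmf_single)
qed

lemma prob_component_false:
  fixes j M :: nat
  assumes "j < M" "0 \<le> q" "q \<le> 1"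
  shows "measure_pmf.prob (Pi_pmf {..<M} False (\<lambda>_. bernoulli_pmf q)) {row. \<not> row j} = 1 - q"
proof -
  let ?P = "Pi_pmf {..<M} False (\<lambda>_. bernoulli_pmf q)"
  have "{row. \<not> row j} = space (measure_pmf ?P) - {row. row j}" by auto
  moreover have "measure_pmf.prob ?P (space (measure_pmf ?P) - {row. row j}) = 1 - measure_pmf.prob ?P {row. row j}"
    by (rule measure_pmf.prob_compl) simp
  ultimately show ?thesis using prob_component_true[OF assms] by simp
qed

lemma stageV:
  fixes N M :: nat and \<epsilon> \<tau> :: real and X :: "nat \<Rightarrow> nat option"
  assumes D: "card (adopters N X) > 0" and \<tau>: "0 < \<tau>" "\<tau> \<le> 2"
  shows "measure_pmf.prob (perturb_pmf N M \<epsilon> X)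
    {v. \<forall>j<M. \<bar>real (card {i\<in>adopters N X. v i j}) / real (card (adopters N X))
        - (keep_prob \<epsilon> * real (card {i. i < N \<and> X i = Some j})
           + (1 - keep_prob \<epsilon>) * (real (card (adopters N X)) - real (card {i. i < N \<and> X i = Some j})))
          / real (card (adopters N X))\<bar> < \<tau>}
    \<ge> 1 - 2 * real M * exp (- \<tau>\<^sup>2 * real (card (adopters N X)) / 4)"
proof -
  define Adp where "Adp = adopters N X"
  define D where "D = real (card Adp)"
  define p where "p = keep_prob \<epsilon>"
  define R where "R = (\<lambda>i::nat. Pi_pmf {..<M} False (\<lambda>_. bernoulli_pmf p))"
  define f where "f = (\<lambda>keep i j. if keep i j then X i = Some j else X i \<noteq> Some j)"
  define F where "F j = (\<lambda>i::nat. \<lambda>row::nat \<Rightarrow> bool. if row j then X i = Some j else X i \<noteq> Some j)" for j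
  define Sx where "Sx j = {i. i < N \<and> X i = Some j}" for j
  define m where "m j = p * real (card (Sx j)) + (1 - p) * (D - real (card (Sx j)))" for j
  have p01: "0 \<le> p" "p \<le> 1" using keep_prob_bounds by (auto simp: p_def)
  have Dpos: "D > 0" using D by (simp add: D_def Adp_def)
  have SxA: "Sx j \<subseteq> Adp" for j by (auto simp: Sx_def Adp_def adopters_def)
  have fin: "finite Adp" by (simp add: Adp_def)
  have pp: "perturb_pmf N M \<epsilon> X = map_pmf f (Pi_pmf Adp (\<lambda>_. False) R)"
    by (simp add: perturb_pmf_def f_def R_def p_def Adp_def)
  have qsum: "(\<Sum>i\<in>Adp. measure_pmf.prob (R i) {row. F j i row}) = m j" if j: "j < M" for j
  proof -
    have "(\<Sum>i\<in>Adp. measure_pmf.prob (R i) {row. F j i row}) = (\<Sum>i\<in>Adp. if i \<in> Sx j then p else 1 - p)"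
    proof (intro sum.cong refl)
      fix i assume i: "i \<in> Adp"
      show "measure_pmf.prob (R i) {row. F j i row} = (if i \<in> Sx j then p else 1 - p)"
      proof (cases "X i = Some j")
        case True
        hence "{row. F j i row} = {row. row j}" by (auto simp: F_def)
        moreover have "i \<in> Sx j" using True i by (auto simp: Sx_def Adp_def adopters_def)
        ultimately show ?thesis using prob_component_true[OF j p01] by (simp add: R_def)
      next
        case False
        hence "{row. F j i row} = {row. \<not> row j}" by (auto simp: F_def)
        moreover have "i \<notin> Sx j" using False by (auto simp: Sx_def)
        ultimately show ?thesis using prob_component_false[OF j p01] by (simp add: R_def)
      qed
    qed
    also have "\<dots> = p * real (card (Adp \<inter> Sx j)) + (1 - p) * real (card (Adp - Sx j))"
      using fin by (simp add: sum.If_cases Int_def set_diff_eq)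
    also have "Adp \<inter> Sx j = Sx j" using SxA by auto
    also have "real (card (Adp - Sx j)) = D - real (card (Sx j))"
    proof -
      have fS: "finite (Sx j)" using finite_subset[OF SxA fin] .
      have "card (Adp - Sx j) = card Adp - card (Sx j)" using card_Diff_subset[OF fS SxA] .
      moreover have "card (Sx j) \<le> card Adp" using card_mono[OF fin SxA] .
      ultimately show ?thesis by (simp add: D_def of_nat_diff)
    qed
    finally show ?thesis by (simp add: m_def)
  qed
  have cnt: "card {i\<in>Adp. f keep i j} = card {i\<in>Adp. F j i (keep i)}" for keep j
    by (simp add: f_def F_def)
  define bad where "bad j = {keep. real (card {i\<in>Adp. F j i (keep i)}) \<ge> m j + \<tau> * D}
                          \<union> {keep. real (card {i\<in>Adp. F j i (keep i)}) \<le> m j - \<tau> * D}" for j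
  have mle: "m j \<le> D" if "j < M" for j
  proof -
    have "m j = (\<Sum>i\<in>Adp. measure_pmf.prob (R i) {row. F j i row})" using qsum[OF that] by simp
    also have "\<dots> \<le> (\<Sum>i\<in>Adp. 1)" by (intro sum_mono) auto
    finally show ?thesis by (simp add: D_def)
  qed
  have badp: "measure_pmf.prob (Pi_pmf Adp (\<lambda>_. False) R) (bad j) \<le> 2 * exp (- \<tau>\<^sup>2 * D / 4)" if j: "j < M" for j
  proof -
    have tD: "0 < \<tau> * D" "\<tau> * D \<le> 2 * D" using \<tau> Dpos by auto
    have eq: "- (\<tau> * D)\<^sup>2 / (4 * D) = - \<tau>\<^sup>2 * D / 4" using Dpos by (simp add: power2_eq_square)
    have "measure_pmf.prob (Pi_pmf Adp (\<lambda>_. False) R) (bad j)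
        \<le> exp (- (\<tau> * D)\<^sup>2 / (4 * D)) + exp (- (\<tau> * D)\<^sup>2 / (4 * D))"
      unfolding bad_def
      by (rule order.trans[OF measure_Un_le], simp, simp, intro add_mono)
         (use chernoff_Pi_pmf[OF fin, of R "F j" D "\<tau> * D" "\<lambda>_. False"] qsum[OF j] mle[OF j] tD in auto)
    also have "\<dots> = 2 * exp (- \<tau>\<^sup>2 * D / 4)" unfolding eq by simp
    finally show ?thesis .
  qed
  have sub: "- (\<Union>j\<in>{..<M}. bad j) \<subseteq> f -` {v. \<forall>j<M. \<bar>real (card {i\<in>Adp. v i j}) / D - m j / D\<bar> < \<tau>}"
  proof
    fix keep assume "keep \<in> - (\<Union>j\<in>{..<M}. bad j)"
    hence h0: "\<forall>j<M. \<not> m j + \<tau> * D \<le> real (card {i\<in>Adp. F j i (keep i)}) \<and> \<not> real (card {i\<in>Adp. F j i (keep i)}) \<le> m j - \<tau> * D"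
      by (auto simp: bad_def)
    have h: "\<forall>j<M. \<bar>real (card {i\<in>Adp. F j i (keep i)}) - m j\<bar> < \<tau> * D"
    proof (intro allI impI)
      fix j assume "j < M"
      with h0 have "\<not> m j + \<tau> * D \<le> real (card {i\<in>Adp. F j i (keep i)}) \<and> \<not> real (card {i\<in>Adp. F j i (keep i)}) \<le> m j - \<tau> * D" by blast
      thus "\<bar>real (card {i\<in>Adp. F j i (keep i)}) - m j\<bar> < \<tau> * D" unfolding abs_less_iff by linarith
    qed
    show "keep \<in> f -` {v. \<forall>j<M. \<bar>real (card {i\<in>Adp. v i j}) / D - m j / D\<bar> < \<tau>}"
    proof (simp, intro allI impI)
      fix j assume "j < M"
      hence "\<bar>real (card {i\<in>Adp. f keep i j}) - m j\<bar> < \<tau> * D" using h cnt by simp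
      hence "\<bar>real (card {i\<in>Adp. f keep i j}) - m j\<bar> / D < \<tau>" using Dpos by (simp add: field_simps)
      thus "\<bar>real (card {i\<in>Adp. f keep i j}) / D - m j / D\<bar> < \<tau>"
        using Dpos by (simp add: diff_divide_distrib[symmetric])
    qed
  qed
  have "measure_pmf.prob (Pi_pmf Adp (\<lambda>_. False) R) (\<Union>j\<in>{..<M}. bad j) \<le> (\<Sum>j\<in>{..<M}. 2 * exp (- \<tau>\<^sup>2 * D / 4))"
  proof (rule order.trans[OF measure_UNION_le])
    show "(\<Sum>j\<in>{..<M}. measure_pmf.prob (Pi_pmf Adp (\<lambda>_. False) R) (bad j)) \<le> (\<Sum>j\<in>{..<M}. 2 * exp (- \<tau>\<^sup>2 * D / 4))"
      by (rule sum_mono) (use badp in auto)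
  qed auto
  hence b: "measure_pmf.prob (Pi_pmf Adp (\<lambda>_. False) R) (- (\<Union>j\<in>{..<M}. bad j)) \<ge> 1 - 2 * real M * exp (- \<tau>\<^sup>2 * D / 4)"
    by (simp only: prob_compl_pmf) simp
  have "measure_pmf.prob (Pi_pmf Adp (\<lambda>_. False) R) (- (\<Union>j\<in>{..<M}. bad j))
     \<le> measure_pmf.prob (perturb_pmf N M \<epsilon> X) {v. \<forall>j<M. \<bar>real (card {i\<in>Adp. v i j}) / D - m j / D\<bar> < \<tau>}"
    unfolding pp by (simp only: measure_map_pmf) (rule measure_pmf.finite_measure_mono[OF sub], simp)
  with b show ?thesis by (simp add: Adp_def D_def m_def Sx_def p_def)
qed

definition validQ :: "nat \<Rightarrow> (nat \<Rightarrow> nat \<Rightarrow> real) \<Rightarrow> bool" where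
  "validQ M Qh \<longleftrightarrow> (\<forall>i. (\<forall>j<M. Qh i j \<ge> 0) \<and> (\<Sum>j<M. Qh i j) = 1)"

lemma pmf_select:
  assumes q: "\<forall>j<M. q j \<ge> 0" "(\<Sum>j<M. q j) = 1" and \<mu>: "0 \<le> \<mu>" "\<mu> \<le> 1" and M: "M \<ge> 1"
  shows "pmf (select_pmf M \<mu> q) j = (if j < M then (1 - \<mu>) * q j + \<mu> / real M else 0)"
proof -
  define f where "f = (\<lambda>j. if j < M then (1 - \<mu>) * q j + \<mu> / real M else 0)"
  have nn: "\<And>x. 0 \<le> f x" using q \<mu> M by (auto simp: f_def)
  have "(\<Sum>x<M. f x) = (1 - \<mu>) * (\<Sum>x<M. q x) + real M * (\<mu> / real M)"
    by (simp add: f_def sum.distrib sum_distrib_left)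
  also have "\<dots> = 1" using q M by simp
  finally have s: "(\<Sum>x<M. f x) = 1" .
  have "(\<integral>\<^sup>+x. ennreal (f x) \<partial>count_space UNIV) = (\<Sum>x<M. ennreal (f x))"
    by (rule nn_integral_count_space') (auto simp: f_def)
  also have "\<dots> = ennreal (\<Sum>x<M. f x)" using nn by (simp add: sum_ennreal)
  finally have i: "(\<integral>\<^sup>+x. ennreal (f x) \<partial>count_space UNIV) = 1" using s by simp
  show ?thesis
    unfolding select_pmf_def f_def[symmetric] using pmf_embed_pmf[OF nn i] by (simp add: f_def)
qed

lemma set_select:
  assumes q: "\<forall>j<M. q j \<ge> 0" "(\<Sum>j<M. q j) = 1" and \<mu>: "0 \<le> \<mu>" "\<mu> \<le> 1" and M: "M \<ge> 1"
  shows "set_pmf (select_pmf M \<mu> q) \<subseteq> {..<M}"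
  using pmf_select[OF assms] by (auto simp: set_pmf_eq)

lemma expectation_ge_point:
  fixes g :: "'a \<Rightarrow> real"
  assumes "\<And>y. 0 \<le> g y" "\<And>y. g y \<le> B"
  shows "measure_pmf.expectation p g \<ge> pmf p x * g x"
proof -
  have "measure_pmf.expectation p (\<lambda>y. g x * indicator {x} y) \<le> measure_pmf.expectation p g"
    using assms by (intro integral_mono measure_pmf.integrable_const_bound[where B="\<bar>g x\<bar>"]
        measure_pmf.integrable_const_bound[where B=B]) (auto simp: indicator_def)
  thus ?thesis by (simp add: measure_pmf_single mult.commute)
qed

lemma prob_bern_map:
  assumes "0 \<le> b" "b \<le> 1"
  shows "measure_pmf.prob (map_pmf (\<lambda>a. if a then Some j else None) (bernoulli_pmf b)) {y. y = Some j} = b"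
    and "measure_pmf.prob (map_pmf (\<lambda>a. if a then Some j else None) (bernoulli_pmf b)) {y. y \<noteq> None} = b"
proof -
  have pre1: "(\<lambda>a. if a then Some j else None) -` {y. y = Some j} = {True}" by (auto split: if_splits)
  have "measure_pmf.prob (map_pmf (\<lambda>a. if a then Some j else None) (bernoulli_pmf b)) {y. y = Some j}
     = measure_pmf.prob (bernoulli_pmf b) ((\<lambda>a. if a then Some j else None) -` {y. y = Some j})"
    by (rule measure_map_pmf)
  also have "\<dots> = b" unfolding pre1 using assms by (simp add: measure_pmf_single)
  finally show "measure_pmf.prob (map_pmf (\<lambda>a. if a then Some j else None) (bernoulli_pmf b)) {y. y = Some j} = b" .
  have pre2: "(\<lambda>a. if a then Some j else None) -` {y. y \<noteq> None} = {True}" by auto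
  have "measure_pmf.prob (map_pmf (\<lambda>a. if a then Some j else None) (bernoulli_pmf b)) {y. y \<noteq> None}
     = measure_pmf.prob (bernoulli_pmf b) ((\<lambda>a. if a then Some j else None) -` {y. y \<noteq> None})"
    by (rule measure_map_pmf)
  also have "\<dots> = b" unfolding pre2 using assms by (simp add: measure_pmf_single)
  finally show "measure_pmf.prob (map_pmf (\<lambda>a. if a then Some j else None) (bernoulli_pmf b)) {y. y \<noteq> None} = b" .
qed

lemma stageX:
  fixes N M :: nat and \<mu> \<beta> :: real and \<eta> :: "nat \<Rightarrow> real" and Qh :: "nat \<Rightarrow> nat \<Rightarrow> real"
  assumes V: "validQ M Qh" and M: "M \<ge> 1" and \<mu>: "0 < \<mu>" "\<mu> < 1" and \<beta>: "1/2 < \<beta>" "\<beta> < 1" and N: "N \<ge> 1"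
  defines "a \<equiv> \<mu> * (1 - \<beta>) / (2 * real M)"
  shows "measure_pmf.prob (adopt_pmf N M \<mu> \<beta> \<eta> Qh)
     {X. real (card (adopters N X)) \<ge> (1 - \<beta>) * real N / 2 \<and> (\<forall>j<M. real (card {i. i < N \<and> X i = Some j}) \<ge> a * real N)}
     \<ge> 1 - (real M + 1) * exp (- a\<^sup>2 * real N / 16)"
proof -
  define b where "b \<Phi> j = (if \<Phi> j then \<beta> else 1 - \<beta>)" for \<Phi> :: "nat \<Rightarrow> bool" and j
  define P where "P = (\<lambda>\<Phi> i. bind_pmf (select_pmf M \<mu> (Qh i)) (\<lambda>j.
           map_pmf (\<lambda>a. if a then Some j else None) (bernoulli_pmf (b \<Phi> j))))"
  have ad: "adopt_pmf N M \<mu> \<beta> \<eta> Qh = bind_pmf (Pi_pmf {..<M} False (\<lambda>j. bernoulli_pmf (\<eta> j)))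
              (\<lambda>\<Phi>. Pi_pmf {..<N} None (P \<Phi>))"
    by (simp add: adopt_pmf_def P_def b_def)
  have b01: "1 - \<beta> \<le> b \<Phi> j" "b \<Phi> j \<le> 1" "0 \<le> b \<Phi> j" for \<Phi> j using \<beta> by (auto simp: b_def)
  have Vi: "\<forall>j<M. Qh i j \<ge> 0" "(\<Sum>j<M. Qh i j) = 1" for i using V by (auto simp: validQ_def)
  have apos: "a > 0" using \<mu> \<beta> M by (simp add: a_def)
  have a_le: "a \<le> (1 - \<beta>) / 2"
  proof -
    have "\<mu> * (1 - \<beta>) \<le> real M * (1 - \<beta>)" using \<mu> M \<beta> by (intro mult_right_mono) auto
    hence "\<mu> * (1 - \<beta>) / (2 * real M) \<le> real M * (1 - \<beta>) / (2 * real M)"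
      by (intro divide_right_mono) auto
    also have "\<dots> = (1 - \<beta>) / 2" using M by simp
    finally show ?thesis by (simp add: a_def)
  qed
  have qD: "measure_pmf.prob (P \<Phi> i) {y. y \<noteq> None} \<ge> 1 - \<beta>" for \<Phi> i
  proof -
    have "measure_pmf.prob (P \<Phi> i) {y. y \<noteq> None} \<ge> 1 - 0 - \<beta>"
      unfolding P_def
    proof (rule bind_pmf_lower[where G="\<lambda>_. True"])
      fix j show "measure_pmf.prob (map_pmf (\<lambda>a. if a then Some j else None) (bernoulli_pmf (b \<Phi> j))) {y. y \<noteq> None} \<ge> 1 - \<beta>"
        by (subst prob_bern_map(2)[OF b01(3) b01(2)]) (rule b01(1))
    qed (use \<beta> in auto)
    thus ?thesis by simp
  qed
  have qDj: "measure_pmf.prob (P \<Phi> i) {y. y = Some j} \<ge> 2 * a" if j: "j < M" for \<Phi> i j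
  proof -
    have "measure_pmf.prob (P \<Phi> i) {y. y = Some j}
        = measure_pmf.expectation (select_pmf M \<mu> (Qh i)) (\<lambda>j'. measure_pmf.prob (map_pmf (\<lambda>a. if a then Some j' else None) (bernoulli_pmf (b \<Phi> j'))) {y. y = Some j})"
      unfolding P_def by (rule measure_bind_pmf_eq)
    also have "\<dots> \<ge> pmf (select_pmf M \<mu> (Qh i)) j * measure_pmf.prob (map_pmf (\<lambda>a. if a then Some j else None) (bernoulli_pmf (b \<Phi> j))) {y. y = Some j}"
      by (rule expectation_ge_point[where B=1]) auto
    finally have f: "measure_pmf.prob (P \<Phi> i) {y. y = Some j} \<ge> pmf (select_pmf M \<mu> (Qh i)) j * measure_pmf.prob (map_pmf (\<lambda>a. if a then Some j else None) (bernoulli_pmf (b \<Phi> j))) {y. y = Some j}" .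
    have e1: "measure_pmf.prob (map_pmf (\<lambda>a. if a then Some j else None) (bernoulli_pmf (b \<Phi> j))) {y. y = Some j} = b \<Phi> j"
      by (rule prob_bern_map(1)) (use b01 in auto)
    have e2: "pmf (select_pmf M \<mu> (Qh i)) j = (1 - \<mu>) * Qh i j + \<mu> / real M"
      using pmf_select[OF Vi(1)[of i] Vi(2)[of i] _ _ M, of \<mu> j] \<mu> j by simp
    from f have "measure_pmf.prob (P \<Phi> i) {y. y = Some j} \<ge> ((1 - \<mu>) * Qh i j + \<mu> / real M) * b \<Phi> j"
      unfolding e1 e2 .
    moreover have "((1 - \<mu>) * Qh i j + \<mu> / real M) * b \<Phi> j \<ge> (\<mu> / real M) * (1 - \<beta>)"
    proof (rule mult_mono)
      show "\<mu> / real M \<le> (1 - \<mu>) * Qh i j + \<mu> / real M" using Vi(1)[of i] j \<mu> by simp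
    qed (use b01 \<mu> M \<beta> Vi(1)[of i] j in auto)
    moreover have "(\<mu> / real M) * (1 - \<beta>) = 2 * a" by (simp add: a_def)
    ultimately show ?thesis by linarith
  qed
  have fixed: "measure_pmf.prob (Pi_pmf {..<N} None (P \<Phi>))
     {X. real (card (adopters N X)) \<ge> (1 - \<beta>) * real N / 2 \<and> (\<forall>j<M. real (card {i. i < N \<and> X i = Some j}) \<ge> a * real N)}
     \<ge> 1 - (real M + 1) * exp (- a\<^sup>2 * real N / 16)" for \<Phi>
  proof -
    let ?Q = "Pi_pmf {..<N} None (P \<Phi>)"
    define F0 where "F0 = (\<lambda>i::nat. \<lambda>y::nat option. y \<noteq> None)"
    define Fj where "Fj j = (\<lambda>i::nat. \<lambda>y::nat option. y = Some j)" for j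
    define m0 where "m0 = (\<Sum>i\<in>{..<N}. measure_pmf.prob (P \<Phi> i) {y. F0 i y})"
    define mj where "mj j = (\<Sum>i\<in>{..<N}. measure_pmf.prob (P \<Phi> i) {y. Fj j i y})" for j
    have Npos: "real N > 0" using N by simp
    have m0ge: "m0 \<ge> (1 - \<beta>) * real N"
    proof -
      have "m0 \<ge> (\<Sum>i\<in>{..<N}. 1 - \<beta>)" unfolding m0_def F0_def by (intro sum_mono qD)
      thus ?thesis by (simp add: mult.commute)
    qed
    have m0le: "m0 \<le> real N"
    proof -
      have "m0 \<le> (\<Sum>i\<in>{..<N}. 1)" unfolding m0_def by (intro sum_mono) auto
      thus ?thesis by simp
    qed
    have mjge: "mj j \<ge> 2 * a * real N" if "j < M" for j
    proof -
      have "mj j \<ge> (\<Sum>i\<in>{..<N}. 2 * a)" unfolding mj_def Fj_def by (intro sum_mono qDj that)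
      thus ?thesis by (simp add: mult.commute)
    qed
    have mjle: "mj j \<le> real N" for j
    proof -
      have "mj j \<le> (\<Sum>i\<in>{..<N}. 1)" unfolding mj_def by (intro sum_mono) auto
      thus ?thesis by simp
    qed
    have card0: "card (adopters N X) = card {i\<in>{..<N}. F0 i (X i)}" for X
      by (rule arg_cong[where f=card]) (auto simp: adopters_def F0_def)
    have cardj: "card {i. i < N \<and> X i = Some j} = card {i\<in>{..<N}. Fj j i (X i)}" for X j
      by (rule arg_cong[where f=card]) (auto simp: Fj_def)
    define bad0 where "bad0 = {X. real (card {i\<in>{..<N}. F0 i (X i)}) \<le> m0 - (1 - \<beta>) * real N / 2}"
    define badj where "badj j = {X. real (card {i\<in>{..<N}. Fj j i (X i)}) \<le> mj j - a * real N}" for j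
    have p0: "measure_pmf.prob ?Q bad0 \<le> exp (- a\<^sup>2 * real N / 16)"
    proof -
      have t: "0 < (1 - \<beta>) * real N / 2" "(1 - \<beta>) * real N / 2 \<le> 2 * real N" using \<beta> Npos by auto
      have "measure_pmf.prob ?Q bad0 \<le> exp (- ((1 - \<beta>) * real N / 2)\<^sup>2 / (4 * real N))"
        unfolding bad0_def m0_def by (rule chernoff_Pi_pmf(2)) (use m0le t in \<open>simp_all add: m0_def\<close>)
      also have "\<dots> \<le> exp (- a\<^sup>2 * real N / 16)"
      proof -
        have "a\<^sup>2 \<le> (1 - \<beta>)\<^sup>2" using a_le apos \<beta> by (intro power_mono) auto
        hence "a\<^sup>2 * real N \<le> (1 - \<beta>)\<^sup>2 * real N" using Npos by (intro mult_right_mono) auto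
        moreover have "((1 - \<beta>) * real N / 2)\<^sup>2 / (4 * real N) = (1 - \<beta>)\<^sup>2 * real N / 16"
          using Npos by (simp add: power2_eq_square field_simps)
        ultimately show ?thesis by simp
      qed
      finally show ?thesis .
    qed
    have pj: "measure_pmf.prob ?Q (badj j) \<le> exp (- a\<^sup>2 * real N / 16)" if "j < M" for j
    proof -
      have t: "0 < a * real N" "a * real N \<le> 2 * real N" using apos a_le \<beta> Npos by auto
      have "measure_pmf.prob ?Q (badj j) \<le> exp (- (a * real N)\<^sup>2 / (4 * real N))"
        unfolding badj_def mj_def by (rule chernoff_Pi_pmf(2)) (use mjle[of j] t in \<open>simp_all add: mj_def\<close>)
      also have "\<dots> \<le> exp (- a\<^sup>2 * real N / 16)"
      proof -
        have eq: "- (a * real N)\<^sup>2 / (4 * real N) = - (a\<^sup>2 * real N) / 4"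
          using Npos by (simp add: power2_eq_square)
        have "0 \<le> a\<^sup>2 * real N" by simp
        hence "- (a\<^sup>2 * real N) / 4 \<le> - a\<^sup>2 * real N / 16" by linarith
        thus ?thesis unfolding exp_le_cancel_iff eq .
      qed
      finally show ?thesis .
    qed
    have sub: "- (bad0 \<union> (\<Union>j\<in>{..<M}. badj j)) \<subseteq>
       {X. real (card (adopters N X)) \<ge> (1 - \<beta>) * real N / 2 \<and> (\<forall>j<M. real (card {i. i < N \<and> X i = Some j}) \<ge> a * real N)}"
    proof
      fix X assume "X \<in> - (bad0 \<union> (\<Union>j\<in>{..<M}. badj j))"
      hence h: "\<not> (X \<in> bad0 \<or> (\<exists>j\<in>{..<M}. X \<in> badj j))" by blast
      show "X \<in> {X. real (card (adopters N X)) \<ge> (1 - \<beta>) * real N / 2 \<and> (\<forall>j<M. real (card {i. i < N \<and> X i = Some j}) \<ge> a * real N)}"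
      proof (simp only: mem_Collect_eq, intro conjI allI impI)
        have "real (card {i\<in>{..<N}. F0 i (X i)}) > m0 - (1 - \<beta>) * real N / 2" using h by (auto simp: bad0_def)
        thus "real (card (adopters N X)) \<ge> (1 - \<beta>) * real N / 2" using m0ge card0[of X] by simp
      next
        fix j assume "j < M"
        hence "X \<notin> badj j" using h by auto
        hence "real (card {i\<in>{..<N}. Fj j i (X i)}) > mj j - a * real N" unfolding badj_def by simp
        thus "real (card {i. i < N \<and> X i = Some j}) \<ge> a * real N" using mjge[OF \<open>j < M\<close>] cardj[of X j] by simp
      qed
    qed
    have "measure_pmf.prob ?Q (bad0 \<union> (\<Union>j\<in>{..<M}. badj j)) \<le> measure_pmf.prob ?Q bad0 + measure_pmf.prob ?Q (\<Union>j\<in>{..<M}. badj j)"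
      by (rule measure_Un_le) auto
    also have "\<dots> \<le> exp (- a\<^sup>2 * real N / 16) + (\<Sum>j\<in>{..<M}. exp (- a\<^sup>2 * real N / 16))"
      by (intro add_mono p0 order.trans[OF measure_UNION_le] sum_mono pj) auto
    finally have "measure_pmf.prob ?Q (bad0 \<union> (\<Union>j\<in>{..<M}. badj j)) \<le> (real M + 1) * exp (- a\<^sup>2 * real N / 16)"
      by (simp add: algebra_simps)
    hence "measure_pmf.prob ?Q (- (bad0 \<union> (\<Union>j\<in>{..<M}. badj j))) \<ge> 1 - (real M + 1) * exp (- a\<^sup>2 * real N / 16)"
      using prob_compl_pmf[of ?Q "bad0 \<union> (\<Union>j\<in>{..<M}. badj j)"] by linarith
    also have "\<dots> \<le> measure_pmf.prob ?Q {X. real (card (adopters N X)) \<ge> (1 - \<beta>) * real N / 2 \<and> (\<forall>j<M. real (card {i. i < N \<and> X i = Some j}) \<ge> a * real N)}"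
      by (rule measure_pmf.finite_measure_mono[OF sub]) auto
    finally show ?thesis by simp
  qed
  have "measure_pmf.prob (adopt_pmf N M \<mu> \<beta> \<eta> Qh)
     {X. real (card (adopters N X)) \<ge> (1 - \<beta>) * real N / 2 \<and> (\<forall>j<M. real (card {i. i < N \<and> X i = Some j}) \<ge> a * real N)}
     \<ge> 1 - 0 - (real M + 1) * exp (- a\<^sup>2 * real N / 16)"
    unfolding ad by (rule bind_pmf_lower[where G="\<lambda>_. True"]) (use fixed in auto)
  thus ?thesis by simp
qed

lemma ratio_sim:
  fixes T s Q a \<Delta> w Mr :: real
  assumes Q: "a \<le> Q" "Q \<le> 1" and a: "a > 0" and T: "\<bar>T - Q\<bar> \<le> \<Delta>" and s: "\<bar>s - 1\<bar> \<le> Mr * \<Delta>"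
    and \<Delta>: "\<Delta> \<ge> 0" and Mr: "Mr \<ge> 0" and w: "2 * \<Delta> / a + 2 * Mr * \<Delta> \<le> w" "w \<le> 1"
  shows "sim (1 + w) (T / s) Q"
proof -
  have Qpos: "Q > 0" using Q a by linarith
  have DQ: "\<Delta> / Q \<le> \<Delta> / a" using Q a \<Delta> by (intro divide_left_mono) auto
  have w0: "w \<ge> 0" using w \<Delta> a Mr by (smt (verit) divide_nonneg_pos mult_nonneg_nonneg)
  have MD: "Mr * \<Delta> \<le> 1/2"
  proof -
    have "2 * \<Delta> / a \<ge> 0" using \<Delta> a by simp
    thus ?thesis using w by linarith
  qed
  have spos: "s \<ge> 1 - Mr * \<Delta>" "s \<le> 1 + Mr * \<Delta>" using s by (auto simp: abs_le_iff)
  have sp: "s > 0" using spos MD by linarith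
  have TQ: "T \<le> Q + \<Delta>" "T \<ge> Q - \<Delta>" using T by (auto simp: abs_le_iff)
  have k1: "\<Delta> + 2 * Mr * \<Delta> * Q \<le> w * Q"
  proof -
    have "\<Delta> = (\<Delta> / Q) * Q" using Qpos by simp
    also have "\<dots> \<le> (\<Delta> / a) * Q" using DQ Qpos by (intro mult_right_mono) auto
    finally have "\<Delta> + 2 * Mr * \<Delta> * Q \<le> (\<Delta> / a + 2 * Mr * \<Delta>) * Q" by (simp add: algebra_simps)
    also have "\<dots> \<le> w * Q"
    proof (rule mult_right_mono)
      have "\<Delta> / a \<le> 2 * \<Delta> / a" using \<Delta> a by (intro divide_right_mono) auto
      thus "\<Delta> / a + 2 * Mr * \<Delta> \<le> w" using w by linarith
    qed (use Qpos in auto)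
    finally show ?thesis .
  qed
  have k2: "2 * \<Delta> + Mr * \<Delta> * Q \<le> w * Q"
  proof -
    have "2 * \<Delta> = (2 * \<Delta> / Q) * Q" using Qpos by simp
    also have "\<dots> \<le> (2 * \<Delta> / a) * Q" using DQ Qpos by (intro mult_right_mono) auto
    finally have "2 * \<Delta> + Mr * \<Delta> * Q \<le> (2 * \<Delta> / a + Mr * \<Delta>) * Q" by (simp add: algebra_simps)
    also have "\<dots> \<le> w * Q"
    proof (rule mult_right_mono)
      have "Mr * \<Delta> \<ge> 0" using Mr \<Delta> by simp
      thus "2 * \<Delta> / a + Mr * \<Delta> \<le> w" using w by linarith
    qed (use Qpos in auto)
    finally show ?thesis .
  qed
  have up: "T \<le> (1 + w) * Q * s"
  proof -
    have "(1 + w) * Q * (1 - Mr * \<Delta>) \<le> (1 + w) * Q * s"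
      using spos w0 Qpos by (intro mult_left_mono) auto
    moreover have "(1 + w) * Q * (1 - Mr * \<Delta>) \<ge> Q + \<Delta>"
    proof -
      have "(1 + w) * Q * (1 - Mr * \<Delta>) = Q + w * Q - (1 + w) * (Mr * \<Delta> * Q)" by (simp add: algebra_simps)
      moreover have "(1 + w) * (Mr * \<Delta> * Q) \<le> 2 * (Mr * \<Delta> * Q)"
        using w Mr \<Delta> Qpos by (intro mult_right_mono) auto
      ultimately show ?thesis using k1 by linarith
    qed
    ultimately show ?thesis using TQ by linarith
  qed
  have lo: "Q * s \<le> (1 + w) * T"
  proof -
    have "Q * s \<le> Q * (1 + Mr * \<Delta>)" using spos Qpos by (intro mult_left_mono) auto
    moreover have "(1 + w) * (Q - \<Delta>) \<le> (1 + w) * T" using TQ w0 by (intro mult_left_mono) auto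
    moreover have "Q * (1 + Mr * \<Delta>) \<le> (1 + w) * (Q - \<Delta>)"
    proof -
      have "(1 + w) * (Q - \<Delta>) = Q + w * Q - \<Delta> - w * \<Delta>" by (simp add: algebra_simps)
      moreover have "w * \<Delta> \<le> 1 * \<Delta>" using w \<Delta> by (intro mult_right_mono) auto
      ultimately show ?thesis using k2 by (simp add: algebra_simps)
    qed
    ultimately show ?thesis by linarith
  qed
  have "T / s / Q \<le> 1 + w" using up sp Qpos by (simp add: field_simps)
  moreover have "1 / (1 + w) \<le> T / s / Q" using lo sp Qpos w0 by (simp add: field_simps)
  ultimately show ?thesis by (simp add: sim_def)
qed

lemma aux_id: "(d::real) \<noteq> 0 \<Longrightarrow> (d + 1) / d * Q + 1 / d * (1 - Q) - 1 / d = Q"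
  by (simp add: field_simps)

lemma Qtilde_close:
  assumes \<epsilon>: "\<epsilon> > 0" and Q: "Q \<ge> 0"
  shows "\<bar>Qtilde \<epsilon> x - Q\<bar> \<le> (exp (\<epsilon> / 2) + 1) / (exp (\<epsilon> / 2) - 1) * \<bar>x - (keep_prob \<epsilon> * Q + (1 - keep_prob \<epsilon>) * (1 - Q))\<bar>"
proof -
  define e where "e = exp (\<epsilon> / 2)"
  have e1: "e > 1" using \<epsilon> by (simp add: e_def)
  define \<gamma> where "\<gamma> = (e + 1) / (e - 1)"
  have \<gamma>: "\<gamma> > 0" using e1 by (simp add: \<gamma>_def)
  have id: "\<gamma> * (keep_prob \<epsilon> * Q + (1 - keep_prob \<epsilon>) * (1 - Q)) - 1 / (e - 1) = Q"
  proof -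
    have ne: "e - 1 \<noteq> 0" "e + 1 \<noteq> 0" using e1 by auto
    have h1: "\<gamma> * keep_prob \<epsilon> = e / (e - 1)"
    proof -
      have "\<gamma> * keep_prob \<epsilon> = (e * (e + 1)) / ((e - 1) * (e + 1))"
        unfolding \<gamma>_def keep_prob_def e_def[symmetric] by (simp add: ac_simps)
      also have "\<dots> = e / (e - 1)" using ne(2) by (rule mult_divide_mult_cancel_right)
      finally show ?thesis .
    qed
    have h2: "\<gamma> * (1 - keep_prob \<epsilon>) = 1 / (e - 1)"
    proof -
      have "1 - keep_prob \<epsilon> = 1 / (e + 1)"
        unfolding keep_prob_def e_def[symmetric] using ne by (simp add: field_simps)
      hence "\<gamma> * (1 - keep_prob \<epsilon>) = (1 * (e + 1)) / ((e - 1) * (e + 1))"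
        unfolding \<gamma>_def by (simp add: ac_simps)
      also have "\<dots> = 1 / (e - 1)" using ne(2) by (rule mult_divide_mult_cancel_right)
      finally show ?thesis .
    qed
    have "\<gamma> * (keep_prob \<epsilon> * Q + (1 - keep_prob \<epsilon>) * (1 - Q)) - 1 / (e - 1)
       = (\<gamma> * keep_prob \<epsilon>) * Q + (\<gamma> * (1 - keep_prob \<epsilon>)) * (1 - Q) - 1 / (e - 1)"
      by (simp add: algebra_simps)
    also have "\<dots> = e / (e - 1) * Q + 1 / (e - 1) * (1 - Q) - 1 / (e - 1)" by (simp only: h1 h2)
    also have "\<dots> = Q" using aux_id[of "e - 1" Q] ne by simp
    finally show ?thesis .
  qed
  have "Qtilde \<epsilon> x = max (\<gamma> * x - 1 / (e - 1)) 0" by (simp add: Qtilde_def \<gamma>_def e_def)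
  hence "\<bar>Qtilde \<epsilon> x - Q\<bar> \<le> \<bar>(\<gamma> * x - 1 / (e - 1)) - Q\<bar>" using Q by auto
  also have "(\<gamma> * x - 1 / (e - 1)) - Q = \<gamma> * (x - (keep_prob \<epsilon> * Q + (1 - keep_prob \<epsilon>) * (1 - Q)))"
    using id by (simp add: algebra_simps)
  also have "\<bar>\<dots>\<bar> = \<gamma> * \<bar>x - (keep_prob \<epsilon> * Q + (1 - keep_prob \<epsilon>) * (1 - Q))\<bar>" using \<gamma> by (simp add: abs_mult)
  finally show ?thesis by (simp add: \<gamma>_def e_def)
qed

lemma qhat_sim:
  fixes lam Q :: "nat \<Rightarrow> real"
  assumes \<epsilon>: "\<epsilon> > 0" and M: "M \<ge> 1"
    and lam: "\<forall>j<M. \<bar>lam j - (keep_prob \<epsilon> * Q j + (1 - keep_prob \<epsilon>) * (1 - Q j))\<bar> \<le> \<tau>"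
    and Qa: "\<forall>j<M. Q j \<ge> a" and a: "a > 0" and Qs: "(\<Sum>j<M. Q j) = 1"
    and \<tau>: "\<tau> \<ge> 0"
    and w: "2 * ((exp (\<epsilon> / 2) + 1) / (exp (\<epsilon> / 2) - 1) * \<tau>) / a
            + 2 * real M * ((exp (\<epsilon> / 2) + 1) / (exp (\<epsilon> / 2) - 1) * \<tau>) \<le> w" "w \<le> 1"
  shows "\<forall>j<M. sim (1 + w) (Qhat_of M \<epsilon> lam j) (Q j)"
proof (intro allI impI)
  fix j assume j: "j < M"
  define \<gamma> where "\<gamma> = (exp (\<epsilon> / 2) + 1) / (exp (\<epsilon> / 2) - 1)"
  define \<Delta> where "\<Delta> = \<gamma> * \<tau>"
  have "exp (\<epsilon> / 2) > 1" using \<epsilon> by simp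
  moreover have "0 < exp (\<epsilon> / 2) + 1" by (metis add_pos_pos exp_gt_zero zero_less_one)
  ultimately have \<gamma>: "\<gamma> > 0" unfolding \<gamma>_def by (intro divide_pos_pos) auto
  have \<Delta>0: "\<Delta> \<ge> 0" using \<gamma> \<tau> by (simp add: \<Delta>_def)
  have Q0: "Q j \<ge> 0" if "j < M" for j using Qa a that by (meson less_imp_le order.trans)
  have close: "\<bar>Qtilde \<epsilon> (lam j) - Q j\<bar> \<le> \<Delta>" if "j < M" for j
  proof -
    have "\<bar>Qtilde \<epsilon> (lam j) - Q j\<bar> \<le> \<gamma> * \<bar>lam j - (keep_prob \<epsilon> * Q j + (1 - keep_prob \<epsilon>) * (1 - Q j))\<bar>"
      using Qtilde_close[OF \<epsilon> Q0[OF that]] by (simp add: \<gamma>_def)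
    also have "\<dots> \<le> \<gamma> * \<tau>" using lam that \<gamma> by (intro mult_left_mono) auto
    finally show ?thesis by (simp add: \<Delta>_def)
  qed
  define s where "s = (\<Sum>j'<M. Qtilde \<epsilon> (lam j'))"
  have s: "\<bar>s - 1\<bar> \<le> real M * \<Delta>"
  proof -
    have "\<bar>s - 1\<bar> = \<bar>\<Sum>j'<M. (Qtilde \<epsilon> (lam j') - Q j')\<bar>" by (simp add: s_def sum_subtractf Qs)
    also have "\<dots> \<le> (\<Sum>j'<M. \<bar>Qtilde \<epsilon> (lam j') - Q j'\<bar>)" by (rule sum_abs)
    also have "\<dots> \<le> (\<Sum>j'<M. \<Delta>)" using close by (intro sum_mono) auto
    finally show ?thesis by simp
  qed
  have Q1: "Q j \<le> 1"
  proof -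
    have "Q j \<le> (\<Sum>j'<M. Q j')" using j Q0 by (intro member_le_sum) auto
    thus ?thesis using Qs by simp
  qed
  have ww: "2 * \<Delta> / a + 2 * real M * \<Delta> \<le> w" using w(1) by (simp add: \<Delta>_def \<gamma>_def)
  have "sim (1 + w) (Qtilde \<epsilon> (lam j) / s) (Q j)"
    by (rule ratio_sim[OF _ Q1 a close[OF j] s \<Delta>0 _ ww w(2)]) (use Qa j in auto)
  moreover have "s \<noteq> 0"
  proof -
    have "real M * \<Delta> \<le> 1/2"
    proof -
      have "2 * \<Delta> / a \<ge> 0" using \<Delta>0 a by simp
      thus ?thesis using ww w(2) by linarith
    qed
    thus ?thesis using s by (auto simp: abs_le_iff)
  qed
  ultimately show "sim (1 + w) (Qhat_of M \<epsilon> lam j) (Q j)" by (simp add: Qhat_of_def s_def Let_def)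
qed

lemma sim_average:
  fixes f :: "nat \<Rightarrow> real"
  assumes "\<forall>k<N. sim C (f k) Q" "Q > 0" "C > 0" "N > 0"
  shows "sim C ((1 / real N) * (\<Sum>k<N. f k)) Q"
proof -
  have b: "Q / C \<le> f k \<and> f k \<le> C * Q" if "k < N" for k
    using assms(1) that assms(2,3) by (auto simp: sim_def field_simps)
  have "(\<Sum>k<N. Q / C) \<le> (\<Sum>k<N. f k)" using b by (intro sum_mono) auto
  moreover have "(\<Sum>k<N. f k) \<le> (\<Sum>k<N. C * Q)" using b by (intro sum_mono) auto
  ultimately have "real N * (Q / C) \<le> (\<Sum>k<N. f k)" "(\<Sum>k<N. f k) \<le> real N * (C * Q)" by auto
  hence x: "Q / C \<le> (1 / real N) * (\<Sum>k<N. f k)" "(1 / real N) * (\<Sum>k<N. f k) \<le> C * Q"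
    using assms(4) by (auto simp: field_simps)
  have "1 / C = (Q / C) / Q" using assms(2) by simp
  also have "\<dots> \<le> ((1 / real N) * (\<Sum>k<N. f k)) / Q" using x(1) assms(2) by (intro divide_right_mono) auto
  finally have l: "1 / C \<le> ((1 / real N) * (\<Sum>k<N. f k)) / Q" .
  have "((1 / real N) * (\<Sum>k<N. f k)) / Q \<le> (C * Q) / Q" using x(2) assms(2) by (intro divide_right_mono) auto
  also have "\<dots> = C" using assms(2) by simp
  finally show ?thesis using l by (simp add: sim_def)
qed

lemma validQ_Qhat_of:
  assumes M: "M \<ge> 1"
  shows "validQ M (\<lambda>k. Qhat_of M \<epsilon> (lam k))"
  unfolding validQ_def
proof (rule allI, rule conjI)
  fix k
  define s where "s = (\<Sum>j'<M. Qtilde \<epsilon> (lam k j'))"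
  have Qt0: "Qtilde \<epsilon> x \<ge> 0" for x by (simp add: Qtilde_def)
  have s0: "s \<ge> 0" unfolding s_def by (intro sum_nonneg) (simp add: Qt0)
  show "\<forall>j<M. 0 \<le> Qhat_of M \<epsilon> (lam k) j"
    using s0 Qt0 by (auto simp: Qhat_of_def Let_def s_def[symmetric])
  show "(\<Sum>j<M. Qhat_of M \<epsilon> (lam k) j) = 1"
  proof (cases "s = 0")
    case True
    thus ?thesis using M by (simp add: Qhat_of_def Let_def s_def[symmetric])
  next
    case False
    hence "(\<Sum>j<M. Qhat_of M \<epsilon> (lam k) j) = (\<Sum>j<M. Qtilde \<epsilon> (lam k j) / s)"
      by (simp add: Qhat_of_def Let_def s_def[symmetric])
    also have "\<dots> = s / s" by (simp add: sum_divide_distrib[symmetric] s_def)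
    finally show ?thesis using False by simp
  qed
qed

lemma validQ_Qhat_round:
  assumes M: "M \<ge> 1" and Qh: "Qh \<in> set_pmf (Qhat_round E N L M \<epsilon> K r X)"
  shows "validQ M Qh"
proof (cases "r = 1")
  case True
  hence "Qh = (\<lambda>k j. 1 / real M)" using Qh by (simp add: Qhat_round_def)
  thus ?thesis using M by (simp add: validQ_def)
next
  case False
  hence "Qh \<in> set_pmf (est_pmf E N L M \<epsilon> K X)" using Qh by (simp add: Qhat_round_def)
  then obtain v e where "Qh = (\<lambda>k. Qhat_of M \<epsilon> (Lam N K X v e k))"
    by (auto simp: est_pmf_def)
  thus ?thesis using validQ_Qhat_of[OF M] by simp
qed

lemma support_adopt:
  assumes V: "validQ M Qh" and M: "M \<ge> 1" and \<mu>: "0 \<le> \<mu>" "\<mu> \<le> 1"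
    and X: "X \<in> set_pmf (adopt_pmf N M \<mu> \<beta> \<eta> Qh)"
  shows "\<forall>i j. X i = Some j \<longrightarrow> j < M"
proof (intro allI impI)
  fix i j assume Xi: "X i = Some j"
  from X obtain \<Phi> where X2: "X \<in> set_pmf (Pi_pmf {..<N} None (\<lambda>i.
         bind_pmf (select_pmf M \<mu> (Qh i)) (\<lambda>j.
           map_pmf (\<lambda>a. if a then Some j else None)
             (bernoulli_pmf (if \<Phi> j then \<beta> else 1 - \<beta>)))))"
    by (auto simp: adopt_pmf_def)
  hence "X \<in> PiE_dflt {..<N} None (set_pmf \<circ> (\<lambda>i.
         bind_pmf (select_pmf M \<mu> (Qh i)) (\<lambda>j.
           map_pmf (\<lambda>a. if a then Some j else None)
             (bernoulli_pmf (if \<Phi> j then \<beta> else 1 - \<beta>)))))"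
    by (simp add: set_Pi_pmf)
  moreover have "i < N"
  proof (rule ccontr)
    assume "\<not> i < N"
    with calculation have "X i = None" by (auto simp: PiE_dflt_def)
    with Xi show False by simp
  qed
  ultimately have "X i \<in> set_pmf (bind_pmf (select_pmf M \<mu> (Qh i)) (\<lambda>j.
           map_pmf (\<lambda>a. if a then Some j else None)
             (bernoulli_pmf (if \<Phi> j then \<beta> else 1 - \<beta>))))"
    by (auto simp: PiE_dflt_def)
  then obtain j' where j': "j' \<in> set_pmf (select_pmf M \<mu> (Qh i))" and "X i \<in> (\<lambda>a. if a then Some j' else None) ` UNIV"
    by auto
  hence "j = j'" using Xi by (auto split: if_splits)
  moreover have "j' < M" using j' set_select[of M "Qh i" \<mu>] V M \<mu> by (auto simp: validQ_def)
  ultimately show "j < M" by simp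
qed

lemma support_Xproc:
  assumes M: "M \<ge> 1" and \<mu>: "0 \<le> \<mu>" "\<mu> \<le> 1"
    and X: "X \<in> set_pmf (Xproc E N L M \<epsilon> \<mu> \<beta> \<eta> K r)"
  shows "\<forall>i j. X i = Some j \<longrightarrow> j < M"
proof (cases r)
  case 0
  thus ?thesis using X by simp
next
  case (Suc r')
  from X obtain X' Qh where Qh: "Qh \<in> set_pmf (Qhat_round E N L M \<epsilon> K (Suc r') X')"
    and X2: "X \<in> set_pmf (adopt_pmf N M \<mu> \<beta> \<eta> Qh)"
    unfolding Suc by auto
  show ?thesis by (rule support_adopt[OF validQ_Qhat_round[OF M Qh] M \<mu> X2])
qed

lemma sum_Dj:
  assumes supp: "\<forall>i j. X i = Some j \<longrightarrow> j < M"
  shows "(\<Sum>j<M. card {i. i < N \<and> X i = Some j}) = card (adopters N X)"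
proof -
  have eq: "adopters N X = (\<Union>j\<in>{..<M}. {i. i < N \<and> X i = Some j})"
    using supp by (auto simp: adopters_def)
  have "card (\<Union>j\<in>{..<M}. {i. i < N \<and> X i = Some j}) = (\<Sum>j<M. card {i. i < N \<and> X i = Some j})"
    by (rule card_UN_disjoint) auto
  thus ?thesis using eq by simp
qed

lemma stageEst:
  fixes E :: "nat \<Rightarrow> nat \<Rightarrow> bool" and N L K M r' :: nat and X :: "nat \<Rightarrow> nat option"
    and \<epsilon> \<theta> \<tau>2 w a :: real
  assumes \<epsilon>: "\<epsilon> > 0" and M: "M \<ge> 1" and mix: "mixing E N L" and N: "N \<ge> 2" and K: "K \<ge> 1"
    and supp: "\<forall>i j. X i = Some j \<longrightarrow> j < M"
    and Dj: "\<forall>j<M. real (card {i. i < N \<and> X i = Some j}) \<ge> a * real N" and a: "a > 0"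
    and \<theta>: "\<theta> > 0" "\<theta> + 1 / real N ^ 2 \<le> 1/3" and \<tau>2: "0 < \<tau>2" "\<tau>2 \<le> 2"
    and w: "2 * ((exp (\<epsilon> / 2) + 1) / (exp (\<epsilon> / 2) - 1) * (3 * (\<theta> + 1 / real N ^ 2) + \<tau>2)) / a
            + 2 * real M * ((exp (\<epsilon> / 2) + 1) / (exp (\<epsilon> / 2) - 1) * (3 * (\<theta> + 1 / real N ^ 2) + \<tau>2)) \<le> w" "w \<le> 1"
    and r': "r' \<noteq> 0"
  shows "measure_pmf.prob (est_pmf E N L M \<epsilon> K X) {Qh. \<forall>j<M. sim (1 + w) (Qbar N Qh j) (Qpop N M r' X j)}
    \<ge> 1 - 2 * real M * exp (- \<tau>2\<^sup>2 * real (card (adopters N X)) / 4)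
        - 2 * real N * (real M + 1) * exp (- (\<theta> * (real K * real (card (adopters N X)) / real N))\<^sup>2
              / (4 * (real K * real (card (adopters N X)) * (1 / real N + 1 / real N ^ 3))))"
proof -
  define Adp where "Adp = adopters N X"
  define D where "D = real (card Adp)"
  define Dj where "Dj j = real (card {i. i < N \<and> X i = Some j})" for j
  define Q where "Q j = Dj j / D" for j
  define p where "p = keep_prob \<epsilon>"
  define \<tau>1 where "\<tau>1 = 3 * (\<theta> + 1 / real N ^ 2)"
  have Npos: "real N > 0" using N by simp
  have DjD: "Dj j \<le> D" for j
    unfolding Dj_def D_def Adp_def by (intro of_nat_mono card_mono) (auto simp: adopters_def)
  have DN: "D \<le> real N"
  proof -
    have "card Adp \<le> card {..<N}" unfolding Adp_def by (intro card_mono) (auto simp: adopters_def)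
    thus ?thesis by (simp add: D_def)
  qed
  have Dpos: "D > 0"
  proof -
    have "a * real N > 0" using a Npos by simp
    hence "Dj 0 > 0" using Dj M by (auto simp: Dj_def)
    thus ?thesis using DjD[of 0] by linarith
  qed
  have Dcard: "card (adopters N X) > 0" using Dpos by (simp add: D_def Adp_def)
  have Qa: "\<forall>j<M. Q j \<ge> a"
  proof (intro allI impI)
    fix j assume j: "j < M"
    have "a = (a * real N) / real N" using Npos by simp
    also have "\<dots> \<le> Dj j / real N" using Dj j Npos by (intro divide_right_mono) (auto simp: Dj_def)
    also have "\<dots> \<le> Dj j / D" using DN Dpos by (intro divide_left_mono) (auto simp: Dj_def)
    finally show "Q j \<ge> a" by (simp add: Q_def)
  qed
  have Qs: "(\<Sum>j<M. Q j) = 1"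
  proof -
    have "(\<Sum>j<M. Q j) = (\<Sum>j<M. Dj j) / D" by (simp add: Q_def sum_divide_distrib)
    also have "(\<Sum>j<M. Dj j) = D" unfolding Dj_def D_def Adp_def
      using sum_Dj[OF supp, of N] by (simp flip: of_nat_sum)
    finally show ?thesis using Dpos by simp
  qed
  have Qpop_eq: "Qpop N M r' X j = Q j" for j using r' by (simp add: Qpop_def Q_def Dj_def D_def Adp_def)
  define Vgood where "Vgood = {v. \<forall>j<M. \<bar>real (card {i\<in>adopters N X. v i j}) / real (card (adopters N X))
        - (keep_prob \<epsilon> * real (card {i. i < N \<and> X i = Some j})
           + (1 - keep_prob \<epsilon>) * (real (card (adopters N X)) - real (card {i. i < N \<and> X i = Some j})))
          / real (card (adopters N X))\<bar> < \<tau>2}"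
  define Egood where "Egood v = {e. \<forall>k<N. \<forall>j<M. \<bar>Lam N K X v e k j - real (card {i\<in>adopters N X. v i j}) / real (card (adopters N X))\<bar>
          \<le> 3 * (\<theta> + 1 / real N ^ 2)}" for v
  define fE where "fE = 2 * real N * (real M + 1) * exp (- (\<theta> * (real K * real (card (adopters N X)) / real N))\<^sup>2
              / (4 * (real K * real (card (adopters N X)) * (1 / real N + 1 / real N ^ 3))))"
  have pV: "measure_pmf.prob (perturb_pmf N M \<epsilon> X) {v. v \<in> Vgood} \<ge> 1 - 2 * real M * exp (- \<tau>2\<^sup>2 * real (card (adopters N X)) / 4)"
    using stageV[OF Dcard \<tau>2, of M \<epsilon>] by (simp add: Vgood_def)
  have pE: "measure_pmf.prob (endpoints_pmf E N L K X) (Egood v) \<ge> 1 - fE" for v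
    unfolding Egood_def fE_def by (rule stageE[OF mix N K Dcard \<theta>])
  have lamstar: "(keep_prob \<epsilon> * Dj j + (1 - keep_prob \<epsilon>) * (D - Dj j)) / D
      = keep_prob \<epsilon> * Q j + (1 - keep_prob \<epsilon>) * (1 - Q j)" for j
    using Dpos by (simp add: Q_def field_simps)
  have good: "(\<lambda>k. Qhat_of M \<epsilon> (Lam N K X v e k)) \<in> {Qh. \<forall>j<M. sim (1 + w) (Qbar N Qh j) (Qpop N M r' X j)}"
    if v: "v \<in> Vgood" and e: "e \<in> Egood v" for v e
  proof (simp only: mem_Collect_eq, intro allI impI)
    fix j assume j: "j < M"
    have close: "\<forall>j<M. \<bar>Lam N K X v e k j - (keep_prob \<epsilon> * Q j + (1 - keep_prob \<epsilon>) * (1 - Q j))\<bar> \<le> \<tau>1 + \<tau>2"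
      if k: "k < N" for k
    proof (intro allI impI)
      fix j assume j: "j < M"
      have h1: "\<bar>Lam N K X v e k j - real (card {i\<in>adopters N X. v i j}) / real (card (adopters N X))\<bar> \<le> \<tau>1"
        using e k j by (simp add: Egood_def \<tau>1_def D_def Adp_def)
      have ls: "(keep_prob \<epsilon> * real (card {i. i < N \<and> X i = Some j}) + (1 - keep_prob \<epsilon>) * (real (card (adopters N X)) - real (card {i. i < N \<and> X i = Some j}))) / real (card (adopters N X))
          = keep_prob \<epsilon> * Q j + (1 - keep_prob \<epsilon>) * (1 - Q j)"
        using lamstar[of j] unfolding D_def Adp_def Dj_def .
      have hv: "\<bar>real (card {i\<in>adopters N X. v i j}) / real (card (adopters N X))
        - (keep_prob \<epsilon> * real (card {i. i < N \<and> X i = Some j})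
           + (1 - keep_prob \<epsilon>) * (real (card (adopters N X)) - real (card {i. i < N \<and> X i = Some j})))
          / real (card (adopters N X))\<bar> < \<tau>2"
        using v j unfolding Vgood_def by blast
      have h2: "\<bar>real (card {i\<in>adopters N X. v i j}) / real (card (adopters N X)) - (keep_prob \<epsilon> * Q j + (1 - keep_prob \<epsilon>) * (1 - Q j))\<bar> < \<tau>2"
        using hv unfolding ls .
      have "\<bar>Lam N K X v e k j - (keep_prob \<epsilon> * Q j + (1 - keep_prob \<epsilon>) * (1 - Q j))\<bar>
         \<le> \<bar>Lam N K X v e k j - real (card {i\<in>adopters N X. v i j}) / real (card (adopters N X))\<bar>
           + \<bar>real (card {i\<in>adopters N X. v i j}) / real (card (adopters N X)) - (keep_prob \<epsilon> * Q j + (1 - keep_prob \<epsilon>) * (1 - Q j))\<bar>"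
        using abs_triangle_ineq[of "Lam N K X v e k j - real (card {i\<in>adopters N X. v i j}) / real (card (adopters N X))"
            "real (card {i\<in>adopters N X. v i j}) / real (card (adopters N X)) - (keep_prob \<epsilon> * Q j + (1 - keep_prob \<epsilon>) * (1 - Q j))"] by simp
      thus "\<bar>Lam N K X v e k j - (keep_prob \<epsilon> * Q j + (1 - keep_prob \<epsilon>) * (1 - Q j))\<bar> \<le> \<tau>1 + \<tau>2"
        using h1 h2 by linarith
    qed
    have \<tau>0: "\<tau>1 + \<tau>2 \<ge> 0" using \<theta> \<tau>2 by (simp add: \<tau>1_def)
    have sims: "\<forall>k<N. sim (1 + w) (Qhat_of M \<epsilon> (Lam N K X v e k) j) (Q j)"
    proof (intro allI impI)
      fix k assume k: "k < N"
      show "sim (1 + w) (Qhat_of M \<epsilon> (Lam N K X v e k) j) (Q j)"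
        using qhat_sim[OF \<epsilon> M close[OF k] Qa a Qs \<tau>0 _ w(2)] w(1) j by (simp add: \<tau>1_def)
    qed
    have w0: "w \<ge> 0"
    proof -
      have "exp (\<epsilon> / 2) > 1" using \<epsilon> by simp
      moreover have "0 < exp (\<epsilon> / 2) + 1" by (metis add_pos_pos exp_gt_zero zero_less_one)
      ultimately have g: "(exp (\<epsilon> / 2) + 1) / (exp (\<epsilon> / 2) - 1) > 0" by (intro divide_pos_pos) auto
      have "0 \<le> (exp (\<epsilon> / 2) + 1) / (exp (\<epsilon> / 2) - 1) * (3 * (\<theta> + 1 / real N ^ 2) + \<tau>2)"
      proof (rule mult_nonneg_nonneg)
        show "0 \<le> 3 * (\<theta> + 1 / real N ^ 2) + \<tau>2" using \<tau>0 by (simp only: \<tau>1_def)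
      qed (use g in simp)
      thus ?thesis using w(1) a by (smt (verit) divide_nonneg_pos mult_nonneg_nonneg of_nat_0_le_iff)
    qed
    have "sim (1 + w) ((1 / real N) * (\<Sum>k<N. Qhat_of M \<epsilon> (Lam N K X v e k) j)) (Q j)"
      by (rule sim_average[OF sims]) (use Qa a j w0 N in auto)
    thus "sim (1 + w) (Qbar N (\<lambda>k. Qhat_of M \<epsilon> (Lam N K X v e k)) j) (Qpop N M r' X j)"
      by (simp add: Qbar_def Qpop_eq)
  qed
  have fV0: "0 \<le> 2 * real M * exp (- \<tau>2\<^sup>2 * real (card (adopters N X)) / 4)" by simp
  have fE0: "0 \<le> fE" by (simp add: fE_def)
  have "measure_pmf.prob (est_pmf E N L M \<epsilon> K X) {Qh. \<forall>j<M. sim (1 + w) (Qbar N Qh j) (Qpop N M r' X j)}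
     \<ge> 1 - 2 * real M * exp (- \<tau>2\<^sup>2 * real (card (adopters N X)) / 4) - fE"
    unfolding est_pmf_def
  proof (rule bind_pmf_lower[where G="\<lambda>v. v \<in> Vgood", OF pV _ fV0 fE0])
    fix v assume v: "v \<in> Vgood"
    have "1 - fE \<le> measure_pmf.prob (endpoints_pmf E N L K X) (Egood v)" by (rule pE)
    also have "\<dots> \<le> measure_pmf.prob (endpoints_pmf E N L K X)
        ((\<lambda>e k. Qhat_of M \<epsilon> (Lam N K X v e k)) -` {Qh. \<forall>j<M. sim (1 + w) (Qbar N Qh j) (Qpop N M r' X j)})"
      by (rule measure_pmf.finite_measure_mono) (use good[OF v] in auto)
    finally show "1 - fE \<le> measure_pmf.prob (map_pmf (\<lambda>e k. Qhat_of M \<epsilon> (Lam N K X v e k)) (endpoints_pmf E N L K X))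
        {Qh. \<forall>j<M. sim (1 + w) (Qbar N Qh j) (Qpop N M r' X j)}" by simp
  qed
  thus ?thesis by (simp add: fE_def)
qed

lemma wcond:
  fixes \<gamma> \<mu> \<beta> \<delta> \<tau> :: real and M :: nat
  assumes \<gamma>: "\<gamma> > 0" and \<mu>: "0 < \<mu>" "\<mu> < 1" and \<beta>: "0 < 1 - \<beta>" "1 - \<beta> \<le> 1" and M: "M \<ge> 1"
    and \<tau>: "0 \<le> \<tau>" "\<tau> \<le> 4 * \<delta>"
  shows "2 * (\<gamma> * \<tau>) / (\<mu> * (1 - \<beta>) / (2 * real M)) + 2 * real M * (\<gamma> * \<tau>)
     \<le> 2 * (4 * real M * (2 * real M + 1) / (\<mu> * (1 - \<beta>)) * \<gamma> * \<delta>)"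
proof -
  define u where "u = \<mu> * (1 - \<beta>)"
  have u: "0 < u" "u \<le> 1" using \<mu> \<beta> by (auto simp: u_def intro: mult_le_one)
  have Mp: "real M \<ge> 1" using M by simp
  have "2 * (\<gamma> * \<tau>) / (u / (2 * real M)) + 2 * real M * (\<gamma> * \<tau>) = 2 * \<gamma> * \<tau> * (2 * real M / u + real M)"
    using u Mp by (simp add: field_simps)
  also have "\<dots> \<le> 2 * \<gamma> * \<tau> * (3 * real M / u)"
  proof (rule mult_left_mono)
    have "real M \<le> real M / u" using u Mp by (simp add: field_simps mult_le_cancel_left1)
    moreover have "3 * real M / u = 2 * real M / u + real M / u" by (simp add: add_divide_distrib[symmetric])
    ultimately show "2 * real M / u + real M \<le> 3 * real M / u" by linarith
  qed (use \<gamma> \<tau> in auto)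
  also have "\<dots> \<le> 2 * \<gamma> * (4 * \<delta>) * (3 * real M / u)"
    using \<gamma> \<tau> u Mp by (intro mult_right_mono mult_left_mono) auto
  also have "\<dots> = 24 * real M * \<gamma> * \<delta> / u" by (simp add: field_simps)
  also have "\<dots> \<le> 8 * real M * (2 * real M + 1) * \<gamma> * \<delta> / u"
  proof -
    have d: "\<delta> \<ge> 0" using \<tau> by linarith
    have "24 * real M * \<gamma> * \<delta> \<le> 8 * real M * (2 * real M + 1) * \<gamma> * \<delta>"
    proof -
      have "24 * real M \<le> 8 * real M * (2 * real M + 1)" using Mp by (simp add: algebra_simps)
      thus ?thesis using \<gamma> d by (intro mult_right_mono) auto
    qed
    thus ?thesis using u by (intro divide_right_mono) auto
  qed
  also have "\<dots> = 2 * (4 * real M * (2 * real M + 1) / u * \<gamma> * \<delta>)" by (simp add: field_simps)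
  finally show ?thesis by (simp add: u_def)
qed

lemma exp_le_pow:
  assumes N: "real N > 0" and x: "x \<ge> real k * ln (real N)"
  shows "exp (- x) \<le> 1 / real N ^ k"
proof -
  have "exp (- x) \<le> exp (- (real k * ln (real N)))" using x by simp
  also have "exp (real k * ln (real N)) = real N ^ k" using N by (simp add: exp_of_nat_mult)
  hence "exp (- (real k * ln (real N))) = 1 / real N ^ k" by (simp add: exp_minus field_simps)
  finally show ?thesis .
qed

lemma asymp_exp: "b > 0 \<Longrightarrow> eventually (\<lambda>N::nat. exp (- b * real N) \<le> 1 / real N ^ 11) at_top"
  by real_asymp

lemma bind_pmf_lower':
  assumes F: "\<And>x. x \<in> set_pmf p \<Longrightarrow> measure_pmf.prob (f x) A \<ge> 1 - e" and e: "e \<ge> 0"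
  shows "measure_pmf.prob (bind_pmf p f) A \<ge> 1 - e"
  using bind_pmf_lower[where G="\<lambda>_. True" and p=p and f=f and A=A, of 0 e] F e by simp

lemma round1:
  assumes M: "M \<ge> 1" and N: "N \<ge> 1" and C: "C \<ge> 1"
  shows "measure_pmf.prob (joint_pmf E N L M \<epsilon> \<mu> \<beta> \<eta> K 1)
     {(X, Qh). \<forall>j<M. sim C (Qbar N Qh j) (Qpop N M (1 - 1) X j)} = 1"
proof -
  have j: "joint_pmf E N L M \<epsilon> \<mu> \<beta> \<eta> K 1 = return_pmf ((\<lambda>_. None), (\<lambda>k j. 1 / real M))"
    by (simp add: joint_pmf_def Qhat_round_def bind_return_pmf)
  have q: "Qbar N (\<lambda>k j. 1 / real M) j = 1 / real M" for j using N by (simp add: Qbar_def)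
  have s: "sim C (1 / real M) (1 / real M)" using M C by (simp add: sim_def)
  have "((\<lambda>_. None), (\<lambda>k j. 1 / real M)) \<in> {(X, Qh). \<forall>j<M. sim C (Qbar N Qh j) (Qpop N M (1 - 1) X j)}"
    using q s by (simp add: Qpop_def)
  thus ?thesis unfolding j by (simp add: measure_return indicator_def)
qed

lemma probX:
  assumes M: "M \<ge> 1" and \<mu>: "0 < \<mu>" "\<mu> < 1" and \<beta>: "1/2 < \<beta>" "\<beta> < 1" and N: "N \<ge> 1"
  shows "measure_pmf.prob (Xproc E N L M \<epsilon> \<mu> \<beta> \<eta> K (Suc r))
     {X. real (card (adopters N X)) \<ge> (1 - \<beta>) * real N / 2 \<and> (\<forall>j<M. real (card {i. i < N \<and> X i = Some j}) \<ge> \<mu> * (1 - \<beta>) / (2 * real M) * real N)}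
     \<ge> 1 - (real M + 1) * exp (- (\<mu> * (1 - \<beta>) / (2 * real M))\<^sup>2 * real N / 16)"
  unfolding Xproc.simps
proof (rule bind_pmf_lower')
  fix X' 
  show "measure_pmf.prob (bind_pmf (Qhat_round E N L M \<epsilon> K (Suc r) X') (adopt_pmf N M \<mu> \<beta> \<eta>))
     {X. real (card (adopters N X)) \<ge> (1 - \<beta>) * real N / 2 \<and> (\<forall>j<M. real (card {i. i < N \<and> X i = Some j}) \<ge> \<mu> * (1 - \<beta>) / (2 * real M) * real N)}
     \<ge> 1 - (real M + 1) * exp (- (\<mu> * (1 - \<beta>) / (2 * real M))\<^sup>2 * real N / 16)"
  proof (rule bind_pmf_lower')
    fix Qh assume "Qh \<in> set_pmf (Qhat_round E N L M \<epsilon> K (Suc r) X')"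
    hence V: "validQ M Qh" by (rule validQ_Qhat_round[OF M])
    show "1 - (real M + 1) * exp (- (\<mu> * (1 - \<beta>) / (2 * real M))\<^sup>2 * real N / 16) \<le> measure_pmf.prob (adopt_pmf N M \<mu> \<beta> \<eta> Qh)
     {X. real (card (adopters N X)) \<ge> (1 - \<beta>) * real N / 2 \<and> (\<forall>j<M. real (card {i. i < N \<and> X i = Some j}) \<ge> \<mu> * (1 - \<beta>) / (2 * real M) * real N)}"
      by (rule stageX[OF V M \<mu> \<beta> N])
  qed simp
qed simp

lemma main:
  fixes M :: nat and \<epsilon> \<mu> \<beta> \<sigma> c h :: real and g :: "nat \<Rightarrow> real" and \<eta> :: "nat \<Rightarrow> real"
  assumes M: "M \<ge> 1" and \<epsilon>: "\<epsilon> > 0" and \<mu>: "0 < \<mu>" "\<mu> < 1"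
    and \<beta>: "1 / 2 < \<beta>" "\<beta> < exp 1 / (exp 1 + 1)" and \<sigma>: "\<sigma> \<ge> 11"
    and g: "\<forall>l>0. eventually (\<lambda>n. g n > l * ln (real n) \<and> g n < l * real n) at_top"
    and c: "c = 4 * real M * (2 * real M + 1) / (\<mu> * (1 - \<beta>)) * ((exp (\<epsilon> / 2) + 1) / (exp (\<epsilon> / 2) - 1))"
    and h: "h = 16 * \<sigma> / (1 - \<beta>)"
  shows "\<exists>N0. \<forall>N\<ge>N0. \<forall>E L. mixing E N L \<longrightarrow>
            (\<forall>r\<ge>1.
              measure_pmf.prob
                (joint_pmf E N L M \<epsilon> \<mu> \<beta> \<eta> (nat \<lceil>h * g N\<rceil>) r)
                {(X, Qh). \<forall>j<M.
                   sim (1 + 2 * (c * sqrt (ln (real N) / g N)))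
                       (Qbar N Qh j) (Qpop N M (r - 1) X j)}
              \<ge> 1 - (10 * real M + 3) / real N ^ 10)"
proof -
  define \<gamma> where "\<gamma> = (exp (\<epsilon> / 2) + 1) / (exp (\<epsilon> / 2) - 1)"
  define a where "a = \<mu> * (1 - \<beta>) / (2 * real M)"
  define b where "b = a\<^sup>2 / 16"
  define Lc where "Lc = 36 + 4 * c\<^sup>2"
  define l where "l = (1 - \<beta>) / 352"
  have \<beta>1: "\<beta> < 1"
  proof -
    have p: "0 < exp (1::real) + 1" by (metis add_pos_pos exp_gt_zero zero_less_one)
    have "exp 1 / (exp 1 + 1) < (1::real)" using p by (simp add: divide_less_eq)
    thus ?thesis using \<beta> by linarith
  qed
  have Mr: "real M \<ge> 1" using M by simp
  have \<gamma>pos: "\<gamma> > 0"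
  proof -
    have "exp (\<epsilon> / 2) > 1" using \<epsilon> by simp
    moreover have "0 < exp (\<epsilon> / 2) + 1" by (metis add_pos_pos exp_gt_zero zero_less_one)
    ultimately show ?thesis unfolding \<gamma>_def by (intro divide_pos_pos) auto
  qed
  have c\<gamma>: "c = 4 * real M * (2 * real M + 1) / (\<mu> * (1 - \<beta>)) * \<gamma>" by (simp add: c \<gamma>_def)
  have cpos: "c > 0" unfolding c\<gamma> using \<gamma>pos \<mu> \<beta>1 Mr by (intro mult_pos_pos divide_pos_pos) auto
  have apos: "a > 0" using \<mu> \<beta>1 Mr by (simp add: a_def)
  have bpos: "b > 0" using apos by (simp add: b_def)
  have Lcpos: "Lc > 0" by (simp add: Lc_def add_pos_nonneg)
  have lpos: "l > 0" using \<beta>1 by (simp add: l_def)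
  have l1: "l \<le> 1" using \<beta> by (simp add: l_def)
  have ev: "eventually (\<lambda>N. 4 \<le> N \<and> M + 1 \<le> N \<and> exp (- b * real N) \<le> 1 / real N ^ 11 \<and>
       (g N > Lc * ln (real N) \<and> g N < Lc * real N) \<and> (g N > l * ln (real N) \<and> g N < l * real N)) at_top"
  proof -
    have e1: "eventually (\<lambda>N. g N > Lc * ln (real N) \<and> g N < Lc * real N) at_top" using g Lcpos by auto
    have e2: "eventually (\<lambda>N. g N > l * ln (real N) \<and> g N < l * real N) at_top" using g lpos by auto
    show ?thesis using e1 e2 eventually_ge_at_top[of 4] eventually_ge_at_top[of "M + 1"] asymp_exp[OF bpos]
      by eventually_elim auto
  qed
  then obtain N0 where N0: "\<And>N. N \<ge> N0 \<Longrightarrow> 4 \<le> N \<and> M + 1 \<le> N \<and> exp (- b * real N) \<le> 1 / real N ^ 11 \<and>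
       (g N > Lc * ln (real N) \<and> g N < Lc * real N) \<and> (g N > l * ln (real N) \<and> g N < l * real N)"
    unfolding eventually_at_top_linorder by blast
  show ?thesis
  proof (rule exI[of _ N0], intro allI impI)
    fix N E L and r :: nat assume NN0: "N0 \<le> N" and mix: "mixing E N L" and r: "1 \<le> r"
    note NN = N0[OF NN0]
    have N4: "N \<ge> 4" and MN: "real M + 1 \<le> real N" and eb: "exp (- b * real N) \<le> 1 / real N ^ 11"
      and gL: "g N > Lc * ln (real N)" and gl: "g N < l * real N"
      using NN by auto
    have Nr: "real N \<ge> 4" using N4 by simp
    have Npos: "real N > 0" using Nr by simp
    have lnN: "ln (real N) \<ge> 1"
    proof -
      have "exp 1 \<le> real N" using exp_le Nr by linarith
      hence "ln (exp 1) \<le> ln (real N)" using Npos by (subst ln_le_cancel_iff) auto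
      thus ?thesis by simp
    qed
    have gpos: "g N > 0"
    proof -
      have "Lc * ln (real N) > 0" using Lcpos lnN by simp
      thus ?thesis using gL by linarith
    qed
    have gN: "g N \<le> real N"
    proof -
      have "l * real N \<le> 1 * real N" using l1 Npos by (intro mult_right_mono) auto
      thus ?thesis using gl by linarith
    qed
    define \<delta> where "\<delta> = sqrt (ln (real N) / g N)"
    have dsq: "\<delta>\<^sup>2 = ln (real N) / g N" using lnN gpos by (simp add: \<delta>_def)
    have dpos: "\<delta> > 0" using lnN gpos by (simp add: \<delta>_def)
    have d1: "ln (real N) / g N \<le> 1 / Lc"
    proof -
      have "ln (real N) / g N \<le> ln (real N) / (Lc * ln (real N))"
        using gL lnN Lcpos gpos by (intro divide_left_mono) (auto intro!: mult_pos_pos)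
      also have "\<dots> = 1 / Lc" using lnN by simp
      finally show ?thesis .
    qed
    have d6: "\<delta> \<le> 1/6"
    proof (rule power2_le_imp_le)
      have "1 / Lc \<le> 1 / 36" using Lcpos by (simp add: Lc_def field_simps)
      moreover have "(1/6::real)\<^sup>2 = 1/36" by (simp add: power2_eq_square)
      ultimately show "\<delta>\<^sup>2 \<le> (1/6)\<^sup>2" using d1 dsq by linarith
    qed simp
    have dc: "c * \<delta> \<le> 1/2"
    proof (rule power2_le_imp_le)
      have "(c * \<delta>)\<^sup>2 = c\<^sup>2 * (ln (real N) / g N)" by (simp add: power_mult_distrib dsq)
      also have "\<dots> \<le> c\<^sup>2 * (1 / Lc)" using d1 by (intro mult_left_mono) auto
      also have "\<dots> \<le> 1 / 4" using Lcpos by (simp add: Lc_def field_simps)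
      finally show "(c * \<delta>)\<^sup>2 \<le> (1/2)\<^sup>2" by (simp add: power2_eq_square)
    qed simp
    have dlow: "6 / real N ^ 2 \<le> \<delta>"
    proof (rule power2_le_imp_le)
      have "(6 / real N ^ 2)\<^sup>2 = 36 / real N ^ 4" by (simp add: power_divide flip: power_mult)
      also have "\<dots> \<le> 1 / real N"
      proof -
        have "real N ^ 3 \<ge> 4 ^ 3" using Nr by (intro power_mono) auto
        hence "real N * 36 \<le> real N * real N ^ 3" using Npos by (intro mult_left_mono) auto
        moreover have "real N ^ 4 = real N * real N ^ 3" by (simp add: eval_nat_numeral)
        ultimately have "36 * real N \<le> real N ^ 4" by (simp add: mult.commute)
        thus ?thesis using Npos by (simp add: field_simps)
      qed
      also have "\<dots> \<le> 1 / g N" using gN gpos by (intro divide_left_mono) auto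
      also have "\<dots> \<le> ln (real N) / g N" using lnN gpos by (intro divide_right_mono) auto
      finally show "(6 / real N ^ 2)\<^sup>2 \<le> \<delta>\<^sup>2" using dsq by simp
    qed (use dpos in simp)
    define K where "K = nat \<lceil>h * g N\<rceil>"
    have hpos: "h > 0" using \<sigma> \<beta>1 by (simp add: h)
    have hg: "h * g N > 0" using hpos gpos by simp
    have Kge: "real K \<ge> h * g N" unfolding K_def by linarith
    have K1: "K \<ge> 1"
    proof -
      have "0 < \<lceil>h * g N\<rceil>" using hg by simp
      thus ?thesis by (simp add: K_def Suc_le_eq)
    qed
    define C where "C = 1 + 2 * (c * \<delta>)"
    have C1: "C \<ge> 1" using cpos dpos by (simp add: C_def)
    show "measure_pmf.prob (joint_pmf E N L M \<epsilon> \<mu> \<beta> \<eta> (nat \<lceil>h * g N\<rceil>) r)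
                {(X, Qh). \<forall>j<M. sim (1 + 2 * (c * sqrt (ln (real N) / g N))) (Qbar N Qh j) (Qpop N M (r - 1) X j)}
              \<ge> 1 - (10 * real M + 3) / real N ^ 10"
    proof (cases "r = 1")
      case True
      have "measure_pmf.prob (joint_pmf E N L M \<epsilon> \<mu> \<beta> \<eta> K 1)
         {(X, Qh). \<forall>j<M. sim C (Qbar N Qh j) (Qpop N M (1 - 1) X j)} = 1"
        by (rule round1[OF M _ C1]) (use N4 in simp)
      moreover have "(10 * real M + 3) / real N ^ 10 \<ge> 0" by simp
      ultimately show ?thesis using True by (simp add: C_def \<delta>_def K_def)
    next
      case False
      obtain r2 where r2: "r - 1 = Suc r2" using False r by (intro that[of "r - 2"]) arith
      have r1: "r - 1 \<noteq> 0" using r2 by simp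
      have N1: "N \<ge> 1" and N2: "N \<ge> 2" using N4 by auto
      have jeq: "joint_pmf E N L M \<epsilon> \<mu> \<beta> \<eta> K r = bind_pmf (Xproc E N L M \<epsilon> \<mu> \<beta> \<eta> K (Suc r2))
          (\<lambda>X. map_pmf (\<lambda>Qh. (X, Qh)) (est_pmf E N L M \<epsilon> K X))"
        using False r2 by (simp add: joint_pmf_def Qhat_round_def)
      define goodX where "goodX X \<longleftrightarrow> real (card (adopters N X)) \<ge> (1 - \<beta>) * real N / 2 \<and>
          (\<forall>j<M. real (card {i. i < N \<and> X i = Some j}) \<ge> \<mu> * (1 - \<beta>) / (2 * real M) * real N)" for X
      have N11: "real N * (1 / real N ^ 11) = 1 / real N ^ 10" using Npos by (simp add: power_Suc field_simps eval_nat_numeral)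
      have pX: "measure_pmf.prob (Xproc E N L M \<epsilon> \<mu> \<beta> \<eta> K (Suc r2)) {X. goodX X} \<ge> 1 - 1 / real N ^ 10"
      proof -
        have "measure_pmf.prob (Xproc E N L M \<epsilon> \<mu> \<beta> \<eta> K (Suc r2)) {X. goodX X}
           \<ge> 1 - (real M + 1) * exp (- (\<mu> * (1 - \<beta>) / (2 * real M))\<^sup>2 * real N / 16)"
          unfolding goodX_def by (rule probX[OF M \<mu> \<beta>(1) \<beta>1 N1])
        moreover have "(real M + 1) * exp (- (\<mu> * (1 - \<beta>) / (2 * real M))\<^sup>2 * real N / 16) \<le> 1 / real N ^ 10"
        proof -
          have "- (\<mu> * (1 - \<beta>) / (2 * real M))\<^sup>2 * real N / 16 = - b * real N" by (simp add: b_def a_def)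
          hence "(real M + 1) * exp (- (\<mu> * (1 - \<beta>) / (2 * real M))\<^sup>2 * real N / 16) = (real M + 1) * exp (- b * real N)"
            by simp
          also have "\<dots> \<le> real N * (1 / real N ^ 11)" using MN eb by (intro mult_mono) auto
          finally show ?thesis using N11 by simp
        qed
        ultimately show ?thesis by linarith
      qed
      have pE: "measure_pmf.prob (map_pmf (\<lambda>Qh. (X, Qh)) (est_pmf E N L M \<epsilon> K X))
          {(X, Qh). \<forall>j<M. sim C (Qbar N Qh j) (Qpop N M (r - 1) X j)} \<ge> 1 - (3 * real M + 2) / real N ^ 10"
        if X: "X \<in> set_pmf (Xproc E N L M \<epsilon> \<mu> \<beta> \<eta> K (Suc r2))" and gX: "goodX X" for X
      proof -
        have supp: "\<forall>i j. X i = Some j \<longrightarrow> j < M" using support_Xproc[OF M _ _ X] \<mu> by auto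
        define D where "D = real (card (adopters N X))"
        have Dge: "D \<ge> (1 - \<beta>) * real N / 2" using gX by (simp add: goodX_def D_def)
        have Dj: "\<forall>j<M. real (card {i. i < N \<and> X i = Some j}) \<ge> a * real N" using gX by (simp add: goodX_def a_def)
        have N2i: "1 / real N ^ 2 \<le> 1/6"
        proof -
          have "real N ^ 2 \<ge> 4 ^ 2" using Nr by (intro power_mono) auto
          hence "1 / real N ^ 2 \<le> 1 / 4 ^ 2" using Npos by (intro divide_left_mono) auto
          thus ?thesis by simp
        qed
        have th: "\<delta> > 0" "\<delta> + 1 / real N ^ 2 \<le> 1/3" using dpos d6 N2i by auto
        have tau: "0 < \<delta> / 2" "\<delta> / 2 \<le> 2" using dpos d6 by auto
        have tau4: "3 * (\<delta> + 1 / real N ^ 2) + \<delta> / 2 \<le> 4 * \<delta>"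
        proof -
          have t: "1 / real N ^ 2 \<le> \<delta> / 6" using dlow by simp
          have gen: "\<And>t::real. t \<le> \<delta> / 6 \<Longrightarrow> 3 * (\<delta> + t) + \<delta> / 2 \<le> 4 * \<delta>" by (simp add: field_simps)
          show ?thesis by (rule gen[OF t])
        qed
        have tau0: "0 \<le> 3 * (\<delta> + 1 / real N ^ 2) + \<delta> / 2" using dpos by simp
        have wc: "2 * (\<gamma> * (3 * (\<delta> + 1 / real N ^ 2) + \<delta> / 2)) / a + 2 * real M * (\<gamma> * (3 * (\<delta> + 1 / real N ^ 2) + \<delta> / 2))
             \<le> 2 * (c * \<delta>)"
        proof -
          have b1: "0 < 1 - \<beta>" "1 - \<beta> \<le> 1" using \<beta>1 \<beta> by auto
          show ?thesis by (rule wcond[OF \<gamma>pos \<mu> b1 M tau0 tau4, folded a_def c\<gamma>])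
        qed
        have w1: "2 * (c * \<delta>) \<le> 1" using dc by simp
        have est: "measure_pmf.prob (est_pmf E N L M \<epsilon> K X) {Qh. \<forall>j<M. sim (1 + 2 * (c * \<delta>)) (Qbar N Qh j) (Qpop N M (r - 1) X j)}
          \<ge> 1 - 2 * real M * exp (- (\<delta> / 2)\<^sup>2 * real (card (adopters N X)) / 4)
            - 2 * real N * (real M + 1) * exp (- (\<delta> * (real K * real (card (adopters N X)) / real N))\<^sup>2
              / (4 * (real K * real (card (adopters N X)) * (1 / real N + 1 / real N ^ 3))))"
          by (rule stageEst[OF \<epsilon> M mix N2 K1 supp Dj apos th tau wc[unfolded \<gamma>_def] w1 r1])
        have D176: "D \<ge> 176 * g N"
        proof -
          have "176 * (l * real N) = (1 - \<beta>) * real N / 2" by (simp add: l_def field_simps)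
          thus ?thesis using gl Dge by linarith
        qed
        have fV: "2 * real M * exp (- (\<delta> / 2)\<^sup>2 * real (card (adopters N X)) / 4) \<le> real M / real N ^ 10"
        proof -
          have x: "real 11 * ln (real N) \<le> (\<delta> / 2)\<^sup>2 * D / 4"
          proof -
            have e1: "(\<delta> / 2)\<^sup>2 * D / 4 = (ln (real N) / g N) * D / 16" using dsq by (simp add: power_divide)
            have e2: "(ln (real N) / g N) * (176 * g N) / 16 \<le> (ln (real N) / g N) * D / 16"
              using D176 lnN gpos by (intro divide_right_mono mult_left_mono) auto
            have e3: "(ln (real N) / g N) * (176 * g N) / 16 = 11 * ln (real N)" using gpos by (simp add: field_simps)
            show ?thesis using e1 e2 e3 by (simp only: of_nat_numeral)
          qed
          have "exp (- (\<delta> / 2)\<^sup>2 * real (card (adopters N X)) / 4) = exp (- ((\<delta> / 2)\<^sup>2 * D / 4))" by (simp add: D_def)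
          also have "\<dots> \<le> 1 / real N ^ 11" by (rule exp_le_pow[OF Npos x])
          finally have e: "exp (- (\<delta> / 2)\<^sup>2 * real (card (adopters N X)) / 4) \<le> 1 / real N ^ 11" .
          have "2 * real M * exp (- (\<delta> / 2)\<^sup>2 * real (card (adopters N X)) / 4) \<le> 2 * real M * (1 / real N ^ 11)"
            using e by (intro mult_left_mono) auto
          also have "\<dots> \<le> real M / real N ^ 10"
          proof -
            have "2 * real M * (1 / real N ^ 11) = (2 / real N) * (real M / real N ^ 10)" using Npos by (simp add: field_simps eval_nat_numeral)
            also have "\<dots> \<le> 1 * (real M / real N ^ 10)" using Nr by (intro mult_right_mono) auto
            finally show ?thesis by simp
          qed
          finally show ?thesis .
        qed
        define B where "B = real K * D / real N"
        have Bge: "B \<ge> 88 * g N"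
        proof -
          have "B \<ge> (h * g N) * ((1 - \<beta>) * real N / 2) / real N"
            unfolding B_def using Kge Dge hg Npos \<beta>1 by (intro divide_right_mono mult_mono) auto
          also have "(h * g N) * ((1 - \<beta>) * real N / 2) / real N = 8 * \<sigma> * g N" using Npos \<beta>1 by (simp add: h field_simps)
          also have "8 * \<sigma> * g N \<ge> 88 * g N" using \<sigma> gpos by simp
          finally show ?thesis by simp
        qed
        have Bpos: "B > 0" using Bge gpos by linarith
        have fE: "2 * real N * (real M + 1) * exp (- (\<delta> * (real K * real (card (adopters N X)) / real N))\<^sup>2
              / (4 * (real K * real (card (adopters N X)) * (1 / real N + 1 / real N ^ 3)))) \<le> 2 * (real M + 1) / real N ^ 10"
        proof -
          have m': "real K * D * (1 / real N + 1 / real N ^ 3) = B * (1 + 1 / real N ^ 2)"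
            using Npos by (simp add: B_def field_simps eval_nat_numeral)
          have m'2: "B * (1 + 1 / real N ^ 2) \<le> 2 * B" using Bpos N2i by simp
          have x: "real 11 * ln (real N) \<le> (\<delta> * B)\<^sup>2 / (4 * (B * (1 + 1 / real N ^ 2)))"
          proof -
            have f1: "(\<delta> * B)\<^sup>2 / (4 * (2 * B)) \<le> (\<delta> * B)\<^sup>2 / (4 * (B * (1 + 1 / real N ^ 2)))"
              using m'2 Bpos by (intro divide_left_mono) (auto intro!: mult_pos_pos add_pos_nonneg)
            have f2: "(ln (real N) / g N) * B / 8 = (\<delta> * B)\<^sup>2 / (4 * (2 * B))"
            proof -
              have "(\<delta> * B)\<^sup>2 / (4 * (2 * B)) = \<delta>\<^sup>2 * B / 8"
                using Bpos by (simp add: power_mult_distrib power2_eq_square)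
              thus ?thesis by (simp only: dsq)
            qed
            have f3: "(ln (real N) / g N) * (88 * g N) / 8 \<le> (ln (real N) / g N) * B / 8"
              using Bge lnN gpos by (intro divide_right_mono mult_left_mono) auto
            have f4: "real 11 * ln (real N) = (ln (real N) / g N) * (88 * g N) / 8" using gpos by simp
            have "real 11 * ln (real N) \<le> (ln (real N) / g N) * B / 8" unfolding f4 by (rule f3)
            also have "\<dots> = (\<delta> * B)\<^sup>2 / (4 * (2 * B))" by (rule f2)
            also have "\<dots> \<le> (\<delta> * B)\<^sup>2 / (4 * (B * (1 + 1 / real N ^ 2)))" by (rule f1)
            finally show ?thesis .
          qed
          have "exp (- (\<delta> * (real K * real (card (adopters N X)) / real N))\<^sup>2
              / (4 * (real K * real (card (adopters N X)) * (1 / real N + 1 / real N ^ 3))))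
             = exp (- ((\<delta> * B)\<^sup>2 / (4 * (B * (1 + 1 / real N ^ 2)))))"
            using m' by (simp add: B_def D_def)
          also have "\<dots> \<le> 1 / real N ^ 11" by (rule exp_le_pow[OF Npos x])
          finally have e: "exp (- (\<delta> * (real K * real (card (adopters N X)) / real N))\<^sup>2
              / (4 * (real K * real (card (adopters N X)) * (1 / real N + 1 / real N ^ 3)))) \<le> 1 / real N ^ 11" .
          have "2 * real N * (real M + 1) * exp (- (\<delta> * (real K * real (card (adopters N X)) / real N))\<^sup>2
              / (4 * (real K * real (card (adopters N X)) * (1 / real N + 1 / real N ^ 3))))
              \<le> 2 * (real M + 1) * (real N * (1 / real N ^ 11))"
          proof -
            have gen: "\<And>Z. Z \<le> 1 / real N ^ 11 \<Longrightarrow> 2 * real N * (real M + 1) * Z \<le> 2 * (real M + 1) * (real N * (1 / real N ^ 11))"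
            proof -
              fix Z :: real assume "Z \<le> 1 / real N ^ 11"
              hence hz: "2 * real N * (real M + 1) * Z \<le> 2 * real N * (real M + 1) * (1 / real N ^ 11)"
                using Npos by (intro mult_left_mono) auto
              have eq: "2 * real N * (real M + 1) * (1 / real N ^ 11) = 2 * (real M + 1) * (real N * (1 / real N ^ 11))"
                by (simp only: ac_simps)
              show "2 * real N * (real M + 1) * Z \<le> 2 * (real M + 1) * (real N * (1 / real N ^ 11))"
                by (rule ord_le_eq_trans[OF hz eq])
            qed
            show ?thesis by (rule gen[OF e])
          qed
          also have "\<dots> = 2 * (real M + 1) / real N ^ 10" using N11 by simp
          finally show ?thesis .
        qed
        have vim: "(\<lambda>Qh. (X, Qh)) -` {(X, Qh). \<forall>j<M. sim C (Qbar N Qh j) (Qpop N M (r - 1) X j)}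
            = {Qh. \<forall>j<M. sim (1 + 2 * (c * \<delta>)) (Qbar N Qh j) (Qpop N M (r - 1) X j)}"
          by (auto simp: C_def)
        have "measure_pmf.prob (map_pmf (\<lambda>Qh. (X, Qh)) (est_pmf E N L M \<epsilon> K X))
          {(X, Qh). \<forall>j<M. sim C (Qbar N Qh j) (Qpop N M (r - 1) X j)}
          = measure_pmf.prob (est_pmf E N L M \<epsilon> K X) {Qh. \<forall>j<M. sim (1 + 2 * (c * \<delta>)) (Qbar N Qh j) (Qpop N M (r - 1) X j)}"
          by (simp only: measure_map_pmf vim)
        moreover have "real M / real N ^ 10 + 2 * (real M + 1) / real N ^ 10 = (3 * real M + 2) / real N ^ 10"
          using Npos by (simp add: field_simps)
        ultimately show ?thesis using est fV fE by linarith
      qed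
      have "measure_pmf.prob (joint_pmf E N L M \<epsilon> \<mu> \<beta> \<eta> K r) {(X, Qh). \<forall>j<M. sim C (Qbar N Qh j) (Qpop N M (r - 1) X j)}
          \<ge> 1 - 1 / real N ^ 10 - (3 * real M + 2) / real N ^ 10"
        unfolding jeq by (rule bind_pmf_lower[where G=goodX, OF pX pE]) auto
      moreover have "1 - 1 / real N ^ 10 - (3 * real M + 2) / real N ^ 10 \<ge> 1 - (10 * real M + 3) / real N ^ 10"
      proof -
        have "1 / real N ^ 10 + (3 * real M + 2) / real N ^ 10 = (3 * real M + 3) / real N ^ 10" using Npos by (simp add: field_simps)
        moreover have "(3 * real M + 3) / real N ^ 10 \<le> (10 * real M + 3) / real N ^ 10"
          using Npos by (intro divide_right_mono) auto
        ultimately show ?thesis by linarith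
      qed
      ultimately show ?thesis unfolding C_def \<delta>_def K_def by linarith
    qed
  qed
qed

theorem lemma10:
  fixes M :: nat and \<epsilon> \<mu> \<beta> \<sigma> :: real and g :: "nat \<Rightarrow> real" and \<eta> :: "nat \<Rightarrow> real"
  assumes "M \<ge> 1" and "\<epsilon> > 0" and "0 < \<mu>" and "\<mu> < 1"
    and "1 / 2 < \<beta>" and "\<beta> < exp 1 / (exp 1 + 1)" and "\<sigma> \<ge> 11"
    and "\<forall>j<M. 0 \<le> \<eta> j \<and> \<eta> j \<le> 1"
    and "\<forall>l>0. eventually (\<lambda>n. g n > l * ln (real n) \<and> g n < l * real n) at_top"
  shows
    "let \<delta> = ln (\<beta> / (1 - \<beta>));
         c = 4 * real M * (2 * real M + 1) / (\<mu> * (1 - \<beta>)) *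
             ((exp (\<epsilon> / 2) + 1) / (exp (\<epsilon> / 2) - 1));
         h = 16 * \<sigma> / (1 - \<beta>)
     in \<exists>N0. \<forall>N\<ge>N0.
          sqrt (g N / ln (real N)) \<ge> c * real M powr (ln 5 / \<delta>\<^sup>2) / \<delta> \<longrightarrow>
          (\<forall>E L. graph_ok E N \<and> mixing E N L \<longrightarrow>
            (\<forall>r\<ge>1.
              measure_pmf.prob
                (joint_pmf E N L M \<epsilon> \<mu> \<beta> \<eta> (nat \<lceil>h * g N\<rceil>) r)
                {(X, Qh). \<forall>j<M.
                   sim (1 + 2 * (c * sqrt (ln (real N) / g N)))
                       (Qbar N Qh j) (Qpop N M (r - 1) X j)}
              \<ge> 1 - (10 * real M + 3) / real N ^ 10))"
proof -
  have m: "\<exists>N0. \<forall>N\<ge>N0. \<forall>E L. mixing E N L \<longrightarrow>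
            (\<forall>r\<ge>1.
              measure_pmf.prob
                (joint_pmf E N L M \<epsilon> \<mu> \<beta> \<eta> (nat \<lceil>16 * \<sigma> / (1 - \<beta>) * g N\<rceil>) r)
                {(X, Qh). \<forall>j<M.
                   sim (1 + 2 * (4 * real M * (2 * real M + 1) / (\<mu> * (1 - \<beta>)) *
             ((exp (\<epsilon> / 2) + 1) / (exp (\<epsilon> / 2) - 1)) * sqrt (ln (real N) / g N)))
                       (Qbar N Qh j) (Qpop N M (r - 1) X j)}
              \<ge> 1 - (10 * real M + 3) / real N ^ 10)"
    by (rule main[OF assms(1) assms(2) assms(3) assms(4) assms(5) assms(6) assms(7) assms(9) refl refl])
  show ?thesis unfolding Let_def using m by blast
qed

end
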